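(* For every $f\in C(\mathbb{CP}^1)$ and every positive integer $n$, $$\lim_{\nu\to\infty}\big\|(\nu+1)^nR_\nu\big(R_\nu^*(f)^n\big)-f^n\big\|_\infty=0.$$
   Context: For an integer $\nu\ge0$, $\mathcal{H}_\nu$ is the space of polynomials in one complex variable of degree $\le\nu$, with inner product $\langle f,g\rangle=\int_{\mathbb{C}}f\overline g\,d\iota_\nu$, $d\iota_\nu(z)=\frac{\nu+1}{(1+|z|^2)^\nu}\frac{dA(z)}{\pi(1+|z|^2)^2}$ ($dA$ Lebesgue measure). It has reproducing kernel $K^\nu(x,y)=(1+x\overline y)^\nu$; the kernel of an operator $\Gamma$ on $\mathcal{H}_\nu$ is $\Gamma(x,y):=\Gamma(K^\nu(\cdot,y))(x)$. $C(\mathbb{CP}^1)$: continuous functions on $\mathbb{C}$ extending continuously to $\infty$, sup norm. $R_\nu(\Gamma)(z)=\Gamma(z,z)/(1+|z|^2)^\nu$; for a function $f$, $R_\nu^*(f)$ is the operator on $\mathcal{H}_\nu$ with $(R_\nu^*(f)h)(x)=\frac1{\nu+1}\int_{\mathbb{C}}f(z)h(z)(1+x\overline z)^\nu d\iota_\nu(z)$ (i.e. $\frac1{\nu+1}$ times the Toeplitz operator with symbol $f$); $R_\nu^*(f)^n$ is its $n$-th power. *)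

theory Defs
  imports "HOL-Analysis.Analysis"
begin

text \<open>C(CP^1): continuous functions on the complex plane with a limit at infinity.\<close>
definition cont_CP1 :: "(complex \<Rightarrow> complex) \<Rightarrow> bool" where
  "cont_CP1 f \<longleftrightarrow> continuous_on UNIV f \<and> (\<exists>L. (f \<longlongrightarrow> L) at_infinity)"

text \<open>Density of the measure d iota_nu with respect to Lebesgue measure dA on C.\<close>
definition iota_dens :: "nat \<Rightarrow> complex \<Rightarrow> real" where
  "iota_dens \<nu> z = (real \<nu> + 1) / (1 + (cmod z)\<^sup>2) ^ \<nu> / (pi * (1 + (cmod z)\<^sup>2)\<^sup>2)"

definition Knu :: "nat \<Rightarrow> complex \<Rightarrow> complex \<Rightarrow> complex" where
  "Knu \<nu> x y = (1 + x * cnj y) ^ \<nu>"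

definition op_kernel :: "nat \<Rightarrow> ((complex \<Rightarrow> complex) \<Rightarrow> (complex \<Rightarrow> complex)) \<Rightarrow> complex \<Rightarrow> complex \<Rightarrow> complex" where
  "op_kernel \<nu> \<Gamma> x y = \<Gamma> (\<lambda>w. Knu \<nu> w y) x"

definition Rnu :: "nat \<Rightarrow> ((complex \<Rightarrow> complex) \<Rightarrow> (complex \<Rightarrow> complex)) \<Rightarrow> complex \<Rightarrow> complex" where
  "Rnu \<nu> \<Gamma> z = op_kernel \<nu> \<Gamma> z z / complex_of_real ((1 + (cmod z)\<^sup>2) ^ \<nu>)"

text \<open>R_nu^*(f): (1/(nu+1)) times the Toeplitz operator with symbol f.\<close>
definition Rnu_star :: "nat \<Rightarrow> (complex \<Rightarrow> complex) \<Rightarrow> (complex \<Rightarrow> complex) \<Rightarrow> (complex \<Rightarrow> complex)" where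
  "Rnu_star \<nu> f h = (\<lambda>x. (1 / (of_nat \<nu> + 1)) *
     (LINT z|lborel. f z * h z * (1 + x * cnj z) ^ \<nu> * complex_of_real (iota_dens \<nu> z)))"

end

theory Submission
  imports Defs
begin
lemma borel_measurable_Complex[measurable (raw)]:
  assumes [measurable]: "f \<in> borel_measurable M" "g \<in> borel_measurable M"
  shows "(\<lambda>p. Complex (f p) (g p)) \<in> borel_measurable M"
proof -
  have "(\<lambda>p. Complex (f p) (g p)) = (\<lambda>p. complex_of_real (f p) + \<i> * complex_of_real (g p))"
    by (auto simp: complex_eq_iff)
  also have "\<dots> \<in> borel_measurable M" by measurable
  finally show ?thesis .
qed

lemma borel_measurable_Complex_case[measurable]:
  "(\<lambda>(x,y). Complex x y) \<in> borel_measurable (M \<Otimes>\<^sub>M N)" if "M = lborel" "N = lborel"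
  using that by (simp add: case_prod_beta')

lemma lborel_complex_eq:
  "(lborel :: complex measure) = distr (lborel \<Otimes>\<^sub>M lborel) borel (\<lambda>(x,y). Complex x y)"
proof (rule lborel_eqI)
  fix l u :: complex
  assume lu: "\<And>b. b \<in> Basis \<Longrightarrow> l \<bullet> b \<le> u \<bullet> b"
  have le: "Re l \<le> Re u" "Im l \<le> Im u" using lu[of 1] lu[of \<i>] by (auto simp: Basis_complex_def)
  have "(\<lambda>(x,y). Complex x y) -` box l u \<inter> space (lborel \<Otimes>\<^sub>M lborel) = {Re l<..<Re u} \<times> {Im l<..<Im u}"
    by (auto simp: box_def Basis_complex_def space_pair_measure)
  then have "emeasure (distr (lborel \<Otimes>\<^sub>M lborel) borel (\<lambda>(x,y). Complex x y)) (box l u)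
      = emeasure (lborel \<Otimes>\<^sub>M lborel) ({Re l<..<Re u} \<times> {Im l<..<Im u})"
    by (subst emeasure_distr) auto
  also have "\<dots> = ennreal (Re u - Re l) * ennreal (Im u - Im l)"
    using le by (simp add: lborel.emeasure_pair_measure_Times)
  also have "\<dots> = (\<Prod>b\<in>Basis. (u - l) \<bullet> b)"
    using le by (simp add: Basis_complex_def ennreal_mult)
  finally show "emeasure (distr (lborel \<Otimes>\<^sub>M lborel) borel (\<lambda>(x,y). Complex x y)) (box l u) = (\<Prod>b\<in>Basis. (u - l) \<bullet> b)" .
qed simp

lemma nn_integral_complex_iter:
  fixes h :: "complex \<Rightarrow> ennreal"
  assumes [measurable]: "h \<in> borel_measurable borel"
  shows "(\<integral>\<^sup>+z. h z \<partial>lborel) = (\<integral>\<^sup>+y. \<integral>\<^sup>+x. h (Complex x y) \<partial>lborel \<partial>lborel)"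
    and "(\<integral>\<^sup>+z. h z \<partial>lborel) = (\<integral>\<^sup>+x. \<integral>\<^sup>+y. h (Complex x y) \<partial>lborel \<partial>lborel)"
proof -
  have m: "(\<lambda>p. h (Complex (fst p) (snd p))) \<in> borel_measurable (lborel \<Otimes>\<^sub>M lborel)"
    by measurable
  have e: "(\<integral>\<^sup>+z. h z \<partial>lborel) = (\<integral>\<^sup>+p. h (Complex (fst p) (snd p)) \<partial>(lborel \<Otimes>\<^sub>M lborel))"
    by (subst lborel_complex_eq) (simp add: nn_integral_distr case_prod_beta')
  show "(\<integral>\<^sup>+z. h z \<partial>lborel) = (\<integral>\<^sup>+y. \<integral>\<^sup>+x. h (Complex x y) \<partial>lborel \<partial>lborel)"
    using lborel_pair.nn_integral_snd[OF m] e by simp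
  show "(\<integral>\<^sup>+z. h z \<partial>lborel) = (\<integral>\<^sup>+x. \<integral>\<^sup>+y. h (Complex x y) \<partial>lborel \<partial>lborel)"
    using lborel.nn_integral_fst[OF m] e by simp
qed

definition shX :: "real \<Rightarrow> complex \<Rightarrow> complex" where
  "shX a z = Complex (Re z + a * Im z) (Im z)"
definition shY :: "real \<Rightarrow> complex \<Rightarrow> complex" where
  "shY b z = Complex (Re z) (Im z + b * Re z)"

lemma shX_meas[measurable]: "shX a \<in> borel_measurable borel"
  unfolding shX_def by measurable
lemma shY_meas[measurable]: "shY a \<in> borel_measurable borel"
  unfolding shY_def by measurable

lemma nn_integral_shX:
  fixes h :: "complex \<Rightarrow> ennreal"
  assumes [measurable]: "h \<in> borel_measurable borel"
  shows "(\<integral>\<^sup>+z. h (shX a z) \<partial>lborel) = (\<integral>\<^sup>+z. h z \<partial>lborel)"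
proof -
  have "(\<integral>\<^sup>+z. h (shX a z) \<partial>lborel) = (\<integral>\<^sup>+y. \<integral>\<^sup>+x. h (Complex (a*y + 1 * x) y) \<partial>lborel \<partial>lborel)"
    by (subst nn_integral_complex_iter(1)) (auto simp: shX_def algebra_simps)
  also have "\<dots> = (\<integral>\<^sup>+y. \<integral>\<^sup>+x. h (Complex x y) \<partial>lborel \<partial>lborel)"
  proof (rule nn_integral_cong)
    fix y :: real
    show "(\<integral>\<^sup>+x. h (Complex (a*y + 1 * x) y) \<partial>lborel) = (\<integral>\<^sup>+x. h (Complex x y) \<partial>lborel)"
      using nn_integral_real_affine[of "\<lambda>x. h (Complex x y)" 1 "a*y"] by simp
  qed
  also have "\<dots> = (\<integral>\<^sup>+z. h z \<partial>lborel)"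
    by (subst nn_integral_complex_iter(1)) auto
  finally show ?thesis .
qed

lemma nn_integral_shY:
  fixes h :: "complex \<Rightarrow> ennreal"
  assumes [measurable]: "h \<in> borel_measurable borel"
  shows "(\<integral>\<^sup>+z. h (shY a z) \<partial>lborel) = (\<integral>\<^sup>+z. h z \<partial>lborel)"
proof -
  have "(\<integral>\<^sup>+z. h (shY a z) \<partial>lborel) = (\<integral>\<^sup>+x. \<integral>\<^sup>+y. h (Complex x (a*x + 1 * y)) \<partial>lborel \<partial>lborel)"
    by (subst nn_integral_complex_iter(2)) (auto simp: shY_def algebra_simps)
  also have "\<dots> = (\<integral>\<^sup>+x. \<integral>\<^sup>+y. h (Complex x y) \<partial>lborel \<partial>lborel)"
  proof (rule nn_integral_cong)
    fix x :: real
    show "(\<integral>\<^sup>+y. h (Complex x (a*x + 1 * y)) \<partial>lborel) = (\<integral>\<^sup>+y. h (Complex x y) \<partial>lborel)"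
      using nn_integral_real_affine[of "\<lambda>y. h (Complex x y)" 1 "a*x"] by simp
  qed
  also have "\<dots> = (\<integral>\<^sup>+z. h z \<partial>lborel)"
    by (subst nn_integral_complex_iter(2)) auto
  finally show ?thesis .
qed

lemma distr_lborel_invariant:
  fixes T :: "complex \<Rightarrow> complex"
  assumes [measurable]: "T \<in> borel_measurable borel"
  assumes inv: "\<And>h::complex \<Rightarrow> ennreal. h \<in> borel_measurable borel \<Longrightarrow>
      (\<integral>\<^sup>+z. h (T z) \<partial>lborel) = (\<integral>\<^sup>+z. h z \<partial>lborel)"
  shows "distr lborel borel T = lborel"
proof (rule measure_eqI)
  fix A :: "complex set" assume A: "A \<in> sets (distr lborel borel T)"
  then have [measurable]: "A \<in> sets borel" by simp
  have "emeasure (distr lborel borel T) A = (\<integral>\<^sup>+z. indicator A (T z) \<partial>lborel)"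
  proof -
    have m: "T -` A \<in> sets lborel" using measurable_sets_borel[of T borel A] by simp
    have "emeasure (distr lborel borel T) A = emeasure lborel (T -` A)"
      by (subst emeasure_distr) auto
    also have "\<dots> = (\<integral>\<^sup>+z. indicator (T -` A) z \<partial>lborel)"
      using m by simp
    finally show ?thesis by (simp add: indicator_def)
  qed
  also have "\<dots> = (\<integral>\<^sup>+z. indicator A z \<partial>lborel)"
    by (rule inv) measurable
  also have "\<dots> = emeasure lborel A" by simp
  finally show "emeasure (distr lborel borel T) A = emeasure lborel A" .
qed simp

lemma distr_shX: "distr lborel borel (shX a) = lborel"
  by (intro distr_lborel_invariant nn_integral_shX) auto
lemma distr_shY: "distr lborel borel (shY a) = lborel"
  by (intro distr_lborel_invariant nn_integral_shY) auto

lemma distr_rot: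
  fixes c s :: real
  assumes "c^2 + s^2 = 1" "s \<noteq> 0"
  shows "distr lborel borel (\<lambda>z. Complex c s * z) = lborel"
proof -
  define al where "al = (c - 1) / s"
  have eq: "(\<lambda>z. Complex c s * z) = shX al \<circ> shY s \<circ> shX al"
  proof
    fix z :: complex
    have 1: "1 + al * s = c" using assms by (simp add: al_def field_simps)
    have 2: "al + al * (1 + al * s) = (-s)"
    proof -
      have "c * (c * s) + s * (s * s) = s * (c^2 + s^2)" by (simp add: algebra_simps power2_eq_square)
      then have e: "c * (c * s) + s * (s * s) = s" using assms(1) by simp
      show ?thesis using assms e by (simp add: al_def field_simps power2_eq_square)
    qed
    have r: "Re z + al * Im z + al * (Im z + s * (Re z + al * Im z)) = (1 + al * s) * Re z + (al + al * (1 + al * s)) * Im z"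
      by (simp add: algebra_simps)
    have i: "Im z + s * (Re z + al * Im z) = s * Re z + (1 + al * s) * Im z"
      by (simp add: algebra_simps)
    show "Complex c s * z = (shX al \<circ> shY s \<circ> shX al) z"
      proof -
      have 3: "al + al * c = (-s)" using 2 1 by simp
      show ?thesis unfolding complex_eq_iff using r i unfolding 1 3 by (simp add: shX_def shY_def)
    qed
  qed
  have "distr lborel borel (shX al \<circ> shY s \<circ> shX al) = distr (distr lborel borel (shY s \<circ> shX al)) borel (shX al)"
    by (subst distr_distr) (auto simp: comp_assoc)
  also have "distr lborel borel (shY s \<circ> shX al) = distr (distr lborel borel (shX al)) borel (shY s)"
    by (subst distr_distr) auto
  finally show ?thesis unfolding eq by (simp add: distr_shX distr_shY)
qed

definition Nq :: "complex \<Rightarrow> real" where "Nq z = 1 + (cmod z)^2"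

lemma Nq_meas[measurable]: "Nq \<in> borel_measurable borel"
  unfolding Nq_def by measurable

lemma emeasure_distr_Nq_atMost:
  "emeasure (distr lborel borel Nq) {..a} = ennreal (pi * max 0 (a - 1))"
proof (cases "a \<ge> 1")
  case True
  have "Nq -` {..a} = cball (0::complex) (sqrt (a - 1))"
  proof (intro set_eqI iffI)
    fix x assume "x \<in> Nq -` {..a}"
    then show "x \<in> cball 0 (sqrt (a - 1))" using True by (auto simp: Nq_def real_le_rsqrt dist_norm)
  next
    fix x assume "x \<in> cball (0::complex) (sqrt (a - 1))"
    then have "cmod x \<le> sqrt (a - 1)" by (simp add: dist_norm)
    then have "(cmod x)^2 \<le> (sqrt (a - 1))^2" by (intro power_mono) auto
    then show "x \<in> Nq -` {..a}" using True by (simp add: Nq_def)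
  qed
  then have "emeasure (distr lborel borel Nq) {..a} = emeasure lborel (cball (0::complex) (sqrt (a - 1)))"
    by (subst emeasure_distr) auto
  also have "\<dots> = ennreal (unit_ball_vol (real DIM(complex)) * sqrt (a - 1) ^ DIM(complex))"
    using True by (intro emeasure_cball) auto
  also have "\<dots> = ennreal (pi * max 0 (a - 1))"
    using True by (simp add: unit_ball_vol_2)
  finally show ?thesis .
next
  case False
  have "Nq -` {..a} = {}"
    using False by (auto simp: Nq_def) (smt (verit) zero_le_power2)
  then show ?thesis using False
    by (subst emeasure_distr) auto
qed

lemma emeasure_density_Nq_atMost:
  "emeasure (density lborel (\<lambda>s::real. ennreal pi * indicator {1..} s)) {..a} = ennreal (pi * max 0 (a - 1))"
proof -
  have "emeasure (density lborel (\<lambda>s::real. ennreal pi * indicator {1..} s)) {..a}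
      = (\<integral>\<^sup>+s. ennreal pi * indicator {1..a} s \<partial>lborel)"
    by (subst emeasure_density) (auto intro!: nn_integral_cong split: split_indicator)
  also have "\<dots> = ennreal pi * emeasure lborel {1..a}"
    by (subst nn_integral_cmult) auto
  also have "\<dots> = ennreal (pi * max 0 (a - 1))"
    by (auto simp: ennreal_mult max_def)
  finally show ?thesis .
qed

lemma distr_Nq: "distr lborel borel Nq = density lborel (\<lambda>s::real. ennreal pi * indicator {1..} s)"
proof (rule measure_eqI_generator_eq[where E="range atMost" and \<Omega>=UNIV and A="\<lambda>i. {..real i}"])
  show "Int_stable (range atMost :: real set set)"
    by (auto simp: Int_stable_def)
  have s: "sets (borel :: real measure) = sigma_sets UNIV (range atMost)"
    by (subst borel_eq_atMost) (simp add: sets_measure_of)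
  show "sets (distr lborel borel Nq) = sigma_sets UNIV (range atMost)" using s by simp
  show "sets (density lborel (\<lambda>s::real. ennreal pi * indicator {1..} s)) = sigma_sets UNIV (range atMost)" using s by simp
  show "emeasure (distr lborel borel Nq) X = emeasure (density lborel (\<lambda>s::real. ennreal pi * indicator {1..} s)) X"
    if "X \<in> range atMost" for X
    using that by (auto simp: emeasure_distr_Nq_atMost emeasure_density_Nq_atMost)
  show "emeasure (distr lborel borel Nq) {..real i} \<noteq> \<infinity>" for i
    by (simp add: emeasure_distr_Nq_atMost)
qed (auto intro: real_nat_ceiling_ge)

lemma distr_Nq': "distr lborel borel Nq = density lborel (\<lambda>s::real. ennreal (pi * indicator {1..} s))"
  unfolding distr_Nq by (intro arg_cong2[where f=density] refl ext) (simp add: ennreal_mult indicator_def)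

lemma has_integral_to_lborel:
  fixes G :: "real \<Rightarrow> real"
  assumes [measurable]: "G \<in> borel_measurable borel" and nn: "\<And>s. s \<ge> 1 \<Longrightarrow> G s \<ge> 0"
    and I: "(G has_integral I) {1..}"
  shows "integrable lborel (\<lambda>s. indicator {1..} s * G s)" "integral\<^sup>L lborel (\<lambda>s. indicator {1..} s * G s) = I"
proof -
  have I0: "I \<ge> 0" using has_integral_nonneg[OF I] nn by auto
  have nnI: "integral\<^sup>N lborel (\<lambda>x. indicator {1..} x * G x) = I"
    using nn_integral_has_integral_lebesgue[OF _ I] nn by auto
  have nn2: "AE x in lborel. 0 \<le> indicator {1..} x * G x" using nn by (auto simp: indicator_def)
  show "integrable lborel (\<lambda>s. indicator {1..} s * G s)"
    by (rule integrableI_nonneg) (use nn2 nnI in auto)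
  show "integral\<^sup>L lborel (\<lambda>s. indicator {1..} s * G s) = I"
    by (subst integral_eq_nn_integral) (use nn2 nnI I0 in auto)
qed

lemma radial_integral:
  fixes G :: "real \<Rightarrow> real"
  assumes [measurable]: "G \<in> borel_measurable borel" and nn: "\<And>s. s \<ge> 1 \<Longrightarrow> G s \<ge> 0"
    and I: "(G has_integral I) {1..}"
  shows "integrable lborel (\<lambda>z. G (Nq z))" "integral\<^sup>L lborel (\<lambda>z. G (Nq z)) = pi * I"
proof -
  note h = has_integral_to_lborel[OF assms]
  have i1: "integrable lborel (\<lambda>s. (pi * indicator {1..} s) *\<^sub>R G s)"
    using integrable_mult_right[OF h(1), of pi] by (simp add: mult.assoc)
  have i2: "integral\<^sup>L lborel (\<lambda>s. (pi * indicator {1..} s) *\<^sub>R G s) = pi * I"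
    using h(2) by (simp add: mult.assoc)
  have d: "integrable (density lborel (\<lambda>s::real. ennreal (pi * indicator {1..} s))) G"
    by (subst integrable_density) (use i1 in auto)
  have d2: "integral\<^sup>L (density lborel (\<lambda>s::real. ennreal (pi * indicator {1..} s))) G = pi * I"
    by (subst integral_density) (use i2 in auto)
  show "integrable lborel (\<lambda>z. G (Nq z))"
    using d unfolding distr_Nq'[symmetric] by (subst (asm) integrable_distr_eq) auto
  show "integral\<^sup>L lborel (\<lambda>z. G (Nq z)) = pi * I"
    using d2 unfolding distr_Nq'[symmetric] by (subst (asm) integral_distr) auto
qed

definition Jval :: "nat \<Rightarrow> nat \<Rightarrow> real" where
  "Jval k r = fact k * fact r / fact (k + 1 + r)"

lemma J_has_integral:
  "((\<lambda>s::real. (s - 1)^k / s^(k + 2 + r)) has_integral Jval k r) {1..}"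
proof (induction k arbitrary: r)
  case 0
  have "((\<lambda>x. 1 / x ^ (r+2)) has_integral 1 / (real (r + 2 - 1) * 1 ^ (r + 2 - 1))) {1..}"
    by (rule has_integral_inverse_power_to_inf) auto
  moreover have "1 / (real (r + 2 - 1) * 1 ^ (r + 2 - 1)) = Jval 0 r"
  proof -
    have "(fact (0 + 1 + r) :: real) = real (Suc r) * fact r" by simp
    moreover have "(fact r :: real) + fact r * real r > 0" by (simp add: add_pos_nonneg)
    ultimately show ?thesis unfolding Jval_def by (simp add: field_simps)
  qed
  ultimately show ?case by (simp add: add.commute)
next
  case (Suc k)
  have d: "((\<lambda>s::real. (s - 1)^k / s^(k + 2 + r) - (s - 1)^k / s^(k + 2 + Suc r)) has_integral (Jval k r - Jval k (Suc r))) {1..}"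
    by (intro has_integral_diff Suc.IH)
  have e: "Jval k r - Jval k (Suc r) = Jval (Suc k) r"
  proof -
    define F :: real where "F = fact (k + 1 + r)"
    have f1: "fact (k + 2 + r) = real (k + 2 + r) * F"
      unfolding F_def using fact_Suc[of "k + 1 + r"] by (simp add: add.commute add.left_commute)
    have f2: "fact (Suc r) = real (Suc r) * (fact r :: real)" by simp
    have f3: "fact (Suc k) = real (Suc k) * (fact k :: real)" by simp
    have p: "F > 0" unfolding F_def by simp
    have g2: "k + 1 + Suc r = k + 2 + r" "Suc k + 1 + r = k + 2 + r" by simp_all
    have "Jval k r = fact k * fact r * real (k + 2 + r) / fact (k + 2 + r)"
    proof -
      have aux: "\<And>x c F::real. c \<noteq> 0 \<Longrightarrow> x / F = x * c / (c * F)"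
        by (metis mult.commute nonzero_mult_divide_mult_cancel_left)
      show ?thesis unfolding Jval_def f1 F_def[symmetric] by (rule aux) simp
    qed
    moreover have "Jval k (Suc r) = fact k * fact r * real (r + 1) / fact (k + 2 + r)"
      unfolding Jval_def f2 g2 by (simp add: ac_simps)
    moreover have "Jval (Suc k) r = fact k * fact r * real (k + 1) / fact (k + 2 + r)"
      unfolding Jval_def f3 g2 by (simp add: ac_simps)
    moreover have "fact k * fact r * real (k + 2 + r) - fact k * fact r * real (r + 1) = (fact k * fact r * real (k + 1) :: real)"
      by (simp add: algebra_simps)
    ultimately show ?thesis by (metis diff_divide_distrib)
  qed
  show ?case
  proof (rule has_integral_eq[rotated])
    show "((\<lambda>s::real. (s - 1)^k / s^(k + 2 + r) - (s - 1)^k / s^(k + 2 + Suc r)) has_integral Jval (Suc k) r) {1..}"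
      using d e by simp
    fix s :: real assume "s \<in> {1..}"
    then have "s \<noteq> 0" by auto
    then show "(s - 1)^k / s^(k + 2 + r) - (s - 1)^k / s^(k + 2 + Suc r) = (s - 1)^Suc k / s^(Suc k + 2 + r)"
      by (simp add: field_simps)
  qed
qed

lemma Nq_pos: "Nq z > 0" and Nq_ge1: "Nq z \<ge> 1"
  by (auto simp: Nq_def add_pos_nonneg)

lemma iota_dens_eq: "iota_dens \<nu> z = (real \<nu> + 1) / (pi * Nq z ^ (\<nu> + 2))"
proof -
  have "iota_dens \<nu> z = (real \<nu> + 1) / Nq z ^ \<nu> / (pi * Nq z ^ 2)"
    by (simp add: iota_dens_def Nq_def)
  also have "\<dots> = (real \<nu> + 1) / (pi * Nq z ^ (\<nu> + 2))"
    by (simp add: power_add divide_divide_eq_left ac_simps power2_eq_square)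
  finally show ?thesis .
qed

lemma iota_dens_nonneg: "iota_dens \<nu> z \<ge> 0"
  unfolding iota_dens_eq using Nq_pos[of z] by (intro divide_nonneg_pos) auto

lemma iota_dens_meas[measurable]: "iota_dens \<nu> \<in> borel_measurable borel"
  unfolding iota_dens_def by measurable

lemma iota_dens_meas'[measurable]: "(\<lambda>z. complex_of_real (iota_dens \<nu> z)) \<in> borel_measurable borel"
  by measurable

lemma cnj_meas[measurable]: "cnj \<in> borel_measurable borel"
  by (intro borel_measurable_continuous_onI continuous_intros)

lemma weight2_integrable: "integrable lborel (\<lambda>z. 1 / Nq z ^ 2)"
  and weight2_integral: "integral\<^sup>L lborel (\<lambda>z. 1 / Nq z ^ 2) = pi"
proof -
  have h: "((\<lambda>s::real. (s - 1)^0 / s^(0 + 2 + 0)) has_integral Jval 0 0) {1..}"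
    by (rule J_has_integral)
  have h': "((\<lambda>s::real. 1 / s^2) has_integral 1) {1..}"
    using h by (simp add: Jval_def power2_eq_square)
  note r = radial_integral[OF _ _ h']
  show "integrable lborel (\<lambda>z. 1 / Nq z ^ 2)" using r(1) by auto
  show "integral\<^sup>L lborel (\<lambda>z. 1 / Nq z ^ 2) = pi" using r(2) by auto
qed

lemma diag_moment:
  assumes "k \<le> \<nu>"
  shows "integrable lborel (\<lambda>z. (cmod z)^(2*k) * iota_dens \<nu> z)"
    "integral\<^sup>L lborel (\<lambda>z. (cmod z)^(2*k) * iota_dens \<nu> z) = 1 / real (\<nu> choose k)"
proof -
  define r where "r = \<nu> - k"
  have nu: "\<nu> = k + r" using assms by (simp add: r_def)
  have h: "((\<lambda>s::real. (s - 1)^k / s^(k + 2 + r)) has_integral Jval k r) {1..}"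
    by (rule J_has_integral)
  note R = radial_integral[OF _ _ h]
  have R1: "integrable lborel (\<lambda>z. (Nq z - 1)^k / Nq z^(k + 2 + r))"
    using R(1) by (auto simp: Nq_def)
  have R2: "integral\<^sup>L lborel (\<lambda>z. (Nq z - 1)^k / Nq z^(k + 2 + r)) = pi * Jval k r"
    using R(2) by (auto simp: Nq_def)
  have eq: "(\<lambda>z. (cmod z)^(2*k) * iota_dens \<nu> z) = (\<lambda>z. ((real \<nu> + 1) / pi) * ((Nq z - 1)^k / Nq z^(k + 2 + r)))"
  proof
    fix z
    have a: "(cmod z)^(2*k) = (Nq z - 1)^k" by (simp add: Nq_def power_mult)
    show "(cmod z)^(2*k) * iota_dens \<nu> z = ((real \<nu> + 1) / pi) * ((Nq z - 1)^k / Nq z^(k + 2 + r))"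
      unfolding a iota_dens_eq nu by (simp add: ac_simps)
  qed
  show "integrable lborel (\<lambda>z. (cmod z)^(2*k) * iota_dens \<nu> z)"
    unfolding eq by (rule integrable_mult_right[OF R1])
  have "integral\<^sup>L lborel (\<lambda>z. (cmod z)^(2*k) * iota_dens \<nu> z) = (real \<nu> + 1) * Jval k r"
    unfolding eq integral_mult_right_zero R2 by simp
  also have "\<dots> = 1 / real (\<nu> choose k)"
  proof -
    have b: "real (\<nu> choose k) = fact \<nu> / (fact k * fact (\<nu> - k))"
      using binomial_fact[OF assms] by simp
    have f: "(fact (k + 1 + r) :: real) = (real \<nu> + 1) * fact \<nu>"
      using nu by simp
    have aux: "\<And>a b c::real. a \<noteq> 0 \<Longrightarrow> a * (b / (a * c)) = b / c" by simp
    have "(real \<nu> + 1) * Jval k r = fact k * fact r / fact \<nu>"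
      unfolding Jval_def f by (rule aux) simp
    then show ?thesis unfolding b r_def by simp
  qed
  finally show "integral\<^sup>L lborel (\<lambda>z. (cmod z)^(2*k) * iota_dens \<nu> z) = 1 / real (\<nu> choose k)" .
qed

lemma integral_rot:
  fixes F :: "complex \<Rightarrow> complex"
  assumes [measurable]: "F \<in> borel_measurable borel" and "c^2 + s^2 = 1" "s \<noteq> 0"
  shows "integral\<^sup>L lborel (\<lambda>z. F (Complex c s * z)) = integral\<^sup>L lborel F"
proof -
  have "integral\<^sup>L lborel F = integral\<^sup>L (distr lborel borel (\<lambda>z. Complex c s * z)) F"
    using distr_rot[OF assms(2,3)] by simp
  also have "\<dots> = integral\<^sup>L lborel (\<lambda>z. F (Complex c s * z))"
    by (rule integral_distr) auto
  finally show ?thesis by simp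
qed

lemma offdiag_moment:
  assumes "j \<noteq> k"
  shows "integral\<^sup>L lborel (\<lambda>z. z^j * cnj z^k * complex_of_real (iota_dens \<nu> z)) = 0"
proof -
  define F where "F = (\<lambda>z::complex. z^j * cnj z^k * complex_of_real (iota_dens \<nu> z))"
  have Fm[measurable]: "F \<in> borel_measurable borel" unfolding F_def by measurable
  define dn where "dn = (if j > k then j - k else k - j)"
  have dpos: "dn \<ge> 1" using assms by (auto simp: dn_def)
  define \<theta> where "\<theta> = pi / (2 * real dn)"
  have th1: "0 < \<theta>" using dpos by (simp add: \<theta>_def)
  have "\<theta> \<le> pi / 2" unfolding \<theta>_def using dpos
    by (intro divide_left_mono) auto
  then have th2: "\<theta> < pi" using pi_gt_zero by linarith
  have s: "sin \<theta> \<noteq> 0" using sin_gt_zero[OF th1 th2] by simp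
  have cs: "(cos \<theta>)^2 + (sin \<theta>)^2 = 1" by simp
  have cis_eq: "Complex (cos \<theta>) (sin \<theta>) = cis \<theta>" by (simp add: complex_eq_iff)
  have ioinv: "iota_dens \<nu> (cis \<theta> * z) = iota_dens \<nu> z" for z
    by (simp add: iota_dens_def norm_mult)
  have fac: "cis \<theta> ^ j * cnj (cis \<theta>) ^ k = cis ((real j - real k) * \<theta>)"
  proof -
    have "cis \<theta> ^ j * cnj (cis \<theta>) ^ k = cis (real j * \<theta> + real k * - \<theta>)"
      unfolding cis_cnj Complex.DeMoivre cis_mult by simp
    also have "real j * \<theta> + real k * - \<theta> = (real j - real k) * \<theta>"
      by (simp add: left_diff_distrib)
    finally show ?thesis .
  qed
  have aux: "\<And>e::real. e > 0 \<Longrightarrow> e * (pi / (2 * e)) = pi / 2" by (simp add: field_simps)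
  have fac2: "cis ((real j - real k) * \<theta>) \<noteq> 1"
  proof (cases "j > k")
    case True
    then have e: "real dn = real j - real k" "real j - real k > 0" by (simp_all add: dn_def of_nat_diff)
    have "(real j - real k) * \<theta> = pi / 2" unfolding \<theta>_def e(1) by (rule aux[OF e(2)])
    then have X: "cis ((real j - real k) * \<theta>) = cis (pi/2) \<or> cis ((real j - real k) * \<theta>) = cis (-(pi/2))" by (simp only: refl simp_thms)
    have "cis (pi/2) \<noteq> 1" "cis (-(pi/2)) \<noteq> 1" by (simp_all add: complex_eq_iff)
    then show ?thesis using X by auto
  next
    case False
    then have e: "real dn = real k - real j" "real k - real j > 0" using assms by (simp_all add: dn_def of_nat_diff)
    have "(real k - real j) * \<theta> = pi / 2" unfolding \<theta>_def e(1) by (rule aux[OF e(2)])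
    then have "(real j - real k) * \<theta> = - (pi / 2)" by (simp add: algebra_simps)
    then have X: "cis ((real j - real k) * \<theta>) = cis (pi/2) \<or> cis ((real j - real k) * \<theta>) = cis (-(pi/2))" by (simp only: refl simp_thms)
    have "cis (pi/2) \<noteq> 1" "cis (-(pi/2)) \<noteq> 1" by (simp_all add: complex_eq_iff)
    then show ?thesis using X by auto
  qed
  have pw: "F (cis \<theta> * z) = cis ((real j - real k) * \<theta>) * F z" for z
  proof -
    have "F (cis \<theta> * z) = (cis \<theta> ^ j * cnj (cis \<theta>) ^ k) * F z"
      unfolding F_def ioinv by (simp add: power_mult_distrib mult_ac)
    then show ?thesis unfolding fac .
  qed
  have "integral\<^sup>L lborel F = integral\<^sup>L lborel (\<lambda>z. F (Complex (cos \<theta>) (sin \<theta>) * z))"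
    using integral_rot[OF Fm cs s] by simp
  also have "\<dots> = integral\<^sup>L lborel (\<lambda>z. cis ((real j - real k) * \<theta>) * F z)"
    unfolding cis_eq pw ..
  also have "\<dots> = cis ((real j - real k) * \<theta>) * integral\<^sup>L lborel F"
    by (rule integral_mult_right_zero)
  finally have "(1 - cis ((real j - real k) * \<theta>)) * integral\<^sup>L lborel F = 0"
    by (simp add: algebra_simps)
  then show ?thesis using fac2 unfolding F_def by simp
qed

lemma zpow_cnjpow: "z^k * cnj z^k = complex_of_real ((cmod z)^(2*k))"
proof -
  have "z^k * cnj z^k = (z * cnj z)^k" by (simp add: power_mult_distrib)
  also have "z * cnj z = complex_of_real ((cmod z)^2)" by (metis complex_norm_square of_real_power)
  finally show ?thesis by (simp add: power_mult)
qed

lemma moment: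
  assumes "j \<le> \<nu>" "k \<le> \<nu>"
  shows "integral\<^sup>L lborel (\<lambda>z. z^j * cnj z^k * complex_of_real (iota_dens \<nu> z))
       = (if j = k then 1 / of_nat (\<nu> choose k) else 0)"
proof (cases "j = k")
  case True
  have "integral\<^sup>L lborel (\<lambda>z. z^j * cnj z^k * complex_of_real (iota_dens \<nu> z))
      = integral\<^sup>L lborel (\<lambda>z. complex_of_real ((cmod z)^(2*k) * iota_dens \<nu> z))"
    unfolding True zpow_cnjpow by simp
  also have "\<dots> = complex_of_real (integral\<^sup>L lborel (\<lambda>z. (cmod z)^(2*k) * iota_dens \<nu> z))"
    by (rule integral_complex_of_real)
  also have "\<dots> = complex_of_real (1 / real (\<nu> choose k))"
    unfolding diag_moment(2)[OF assms(2)] ..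
  finally show ?thesis using True by simp
next
  case False
  then show ?thesis using offdiag_moment[OF False] by simp
qed

lemma wt_integrable:
  fixes g :: "complex \<Rightarrow> 'b::{banach, second_countable_topology, real_normed_algebra_1}"
  assumes [measurable]: "g \<in> borel_measurable borel" and b: "\<And>z. norm (g z) \<le> C * Nq z ^ \<nu>"
  shows "integrable lborel (\<lambda>z. g z * of_real (iota_dens \<nu> z))"
proof -
  have C: "C \<ge> 0" using b[of 0] Nq_pos[of 0] by (smt (verit) norm_ge_zero zero_less_power mult_nonneg_nonneg zero_le_mult_iff)
  have i: "integrable lborel (\<lambda>z. (C * (real \<nu> + 1) / pi) * (1 / Nq z ^ 2))"
    by (rule integrable_mult_right[OF weight2_integrable])
  show ?thesis
  proof (rule Bochner_Integration.integrable_bound[OF i])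
    show "(\<lambda>z. g z * of_real (iota_dens \<nu> z)) \<in> borel_measurable lborel" by measurable
    show "AE z in lborel. norm (g z * of_real (iota_dens \<nu> z)) \<le> norm ((C * (real \<nu> + 1) / pi) * (1 / Nq z ^ 2))"
    proof (rule AE_I2)
      fix z
      have np: "Nq z > 0" by (rule Nq_pos)
      have "norm (g z * of_real (iota_dens \<nu> z)) \<le> norm (g z) * iota_dens \<nu> z"
        using norm_mult_ineq[of "g z" "of_real (iota_dens \<nu> z)"] iota_dens_nonneg[of \<nu> z] by simp
      also have "\<dots> \<le> C * Nq z ^ \<nu> * iota_dens \<nu> z"
        by (rule mult_right_mono[OF b iota_dens_nonneg])
      also have "\<dots> = (C * (real \<nu> + 1) / pi) * (1 / Nq z ^ 2)"
        using np by (simp add: iota_dens_eq power_add field_simps power2_eq_square)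
      also have "\<dots> \<le> norm ((C * (real \<nu> + 1) / pi) * (1 / Nq z ^ 2))" unfolding real_norm_def by (rule abs_ge_self)
      finally show "norm (g z * of_real (iota_dens \<nu> z)) \<le> norm ((C * (real \<nu> + 1) / pi) * (1 / Nq z ^ 2))" .
    qed
  qed
qed

definition Bd :: "nat \<Rightarrow> (complex \<Rightarrow> complex) \<Rightarrow> bool" where
  "Bd \<nu> u \<longleftrightarrow> u \<in> borel_measurable borel \<and> (\<exists>C. \<forall>z. cmod (u z) \<le> C * sqrt (Nq z) ^ \<nu>)"

definition Wt :: "nat \<Rightarrow> (complex \<Rightarrow> complex) \<Rightarrow> complex" where
  "Wt \<nu> g = integral\<^sup>L lborel (\<lambda>z. g z * complex_of_real (iota_dens \<nu> z))"

definition Pop :: "nat \<Rightarrow> (complex \<Rightarrow> complex) \<Rightarrow> complex \<Rightarrow> complex" where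
  "Pop \<nu> u = (\<lambda>x. integral\<^sup>L lborel (\<lambda>z. u z * (1 + x * cnj z)^\<nu> * complex_of_real (iota_dens \<nu> z)))"

definition polyf :: "nat \<Rightarrow> (nat \<Rightarrow> complex) \<Rightarrow> complex \<Rightarrow> complex" where
  "polyf \<nu> a = (\<lambda>x. \<Sum>k\<le>\<nu>. a k * x^k)"

definition ip :: "nat \<Rightarrow> (complex \<Rightarrow> complex) \<Rightarrow> (complex \<Rightarrow> complex) \<Rightarrow> complex" where
  "ip \<nu> u v = Wt \<nu> (\<lambda>z. u z * cnj (v z))"

definition mom :: "nat \<Rightarrow> (complex \<Rightarrow> complex) \<Rightarrow> nat \<Rightarrow> complex" where
  "mom \<nu> u k = Wt \<nu> (\<lambda>z. u z * cnj z ^ k)"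

definition N2 :: "nat \<Rightarrow> (complex \<Rightarrow> complex) \<Rightarrow> real" where
  "N2 \<nu> u = integral\<^sup>L lborel (\<lambda>z. (cmod (u z))^2 * iota_dens \<nu> z)"

lemma sqrtNq_ge1: "sqrt (Nq z) \<ge> 1"
  using Nq_ge1[of z] by simp

lemma cmod_le_sqrtNq: "cmod z \<le> sqrt (Nq z)"
  by (rule real_le_rsqrt) (simp add: Nq_def)

lemma sqrtNq_pow_sq: "sqrt (Nq z) ^ \<nu> * sqrt (Nq z) ^ \<nu> = Nq z ^ \<nu>"
proof -
  have [simp]: "\<bar>Nq z\<bar> = Nq z" using Nq_pos[of z] by simp
  have "sqrt (Nq z) ^ \<nu> * sqrt (Nq z) ^ \<nu> = (sqrt (Nq z) * sqrt (Nq z)) ^ \<nu>"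
    by (rule power_mult_distrib[symmetric])
  also have "sqrt (Nq z) * sqrt (Nq z) = Nq z" using Nq_pos[of z] by simp
  finally show ?thesis .
qed

lemma Bd_const_nonneg: "cmod (u :: complex) \<le> C * sqrt (Nq z) ^ \<nu> \<Longrightarrow> C \<ge> 0"
  using sqrtNq_ge1[of z]
  by (smt (verit) norm_ge_zero zero_le_mult_iff zero_less_power)

lemma Bd_measurable: "Bd \<nu> u \<Longrightarrow> u \<in> borel_measurable borel"
  by (simp add: Bd_def)

lemma Bd_pair_integrable:
  assumes "Bd \<nu> u" "Bd \<nu> v"
  shows "integrable lborel (\<lambda>z. u z * cnj (v z) * complex_of_real (iota_dens \<nu> z))"
proof -
  obtain C1 where C1: "\<And>z. cmod (u z) \<le> C1 * sqrt (Nq z) ^ \<nu>" using assms(1) by (auto simp: Bd_def)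
  obtain C2 where C2: "\<And>z. cmod (v z) \<le> C2 * sqrt (Nq z) ^ \<nu>" using assms(2) by (auto simp: Bd_def)
  have [measurable]: "u \<in> borel_measurable borel" "v \<in> borel_measurable borel"
    using assms by (auto simp: Bd_def)
  have c1: "C1 \<ge> 0" using Bd_const_nonneg[OF C1[of 0]] .
  show ?thesis
  proof (rule wt_integrable[where C="C1 * C2"])
    show "(\<lambda>z. u z * cnj (v z)) \<in> borel_measurable borel" by measurable
    fix z
    have "norm (u z * cnj (v z)) = cmod (u z) * cmod (v z)" by (simp add: norm_mult)
    also have "\<dots> \<le> (C1 * sqrt (Nq z) ^ \<nu>) * (C2 * sqrt (Nq z) ^ \<nu>)"
      using Nq_pos[of z] by (intro mult_mono C1 C2) (auto intro!: mult_nonneg_nonneg c1)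
    also have "\<dots> = C1 * C2 * Nq z ^ \<nu>"
      using sqrtNq_pow_sq[of z \<nu>] by (simp add: ac_simps)
    finally show "norm (u z * cnj (v z)) \<le> C1 * C2 * Nq z ^ \<nu>" .
  qed
qed

lemma Bd_realsq_integrable:
  assumes "Bd \<nu> u" "Bd \<nu> v"
  shows "integrable lborel (\<lambda>z. cmod (u z) * cmod (v z) * iota_dens \<nu> z)"
proof -
  have i: "integrable lborel (\<lambda>z. norm (u z * cnj (v z) * complex_of_real (iota_dens \<nu> z)))"
    using Bd_pair_integrable[OF assms] by (rule integrable_norm)
  show ?thesis
    using i by (simp add: norm_mult iota_dens_nonneg abs_of_nonneg)
qed

lemma Bd_pow: "k \<le> \<nu> \<Longrightarrow> Bd \<nu> (\<lambda>z. z^k)"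
  unfolding Bd_def
proof (intro conjI exI allI)
  fix z :: complex assume k: "k \<le> \<nu>"
  have "cmod (z^k) = cmod z ^ k" by (simp add: norm_power)
  also have "\<dots> \<le> sqrt (Nq z) ^ k" by (intro power_mono cmod_le_sqrtNq) auto
  also have "\<dots> \<le> sqrt (Nq z) ^ \<nu>" by (intro power_increasing k sqrtNq_ge1)
  finally show "cmod (z^k) \<le> 1 * sqrt (Nq z) ^ \<nu>" by simp
qed measurable

lemma Bd_add: "Bd \<nu> u \<Longrightarrow> Bd \<nu> v \<Longrightarrow> Bd \<nu> (\<lambda>z. u z + v z)"
  unfolding Bd_def
proof (elim conjE exE, intro conjI exI allI)
  fix C1 C2 z
  assume C1: "\<forall>z. cmod (u z) \<le> C1 * sqrt (Nq z) ^ \<nu>" and C2: "\<forall>z. cmod (v z) \<le> C2 * sqrt (Nq z) ^ \<nu>"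
  have "cmod (u z + v z) \<le> cmod (u z) + cmod (v z)" by (rule norm_triangle_ineq)
  also have "\<dots> \<le> (C1 + C2) * sqrt (Nq z) ^ \<nu>" using C1 C2 by (simp add: distrib_right add_mono)
  finally show "cmod (u z + v z) \<le> (C1 + C2) * sqrt (Nq z) ^ \<nu>" .
qed auto

lemma Bd_mult_bounded:
  assumes "Bd \<nu> u" "f \<in> borel_measurable borel" "\<And>z. cmod (f z) \<le> M"
  shows "Bd \<nu> (\<lambda>z. f z * u z)"
  using assms(1) unfolding Bd_def
proof (elim conjE exE, intro conjI exI allI)
  fix C1 z
  assume C1: "\<forall>z. cmod (u z) \<le> C1 * sqrt (Nq z) ^ \<nu>"
  have M: "M \<ge> 0" using assms(3)[of 0] by (smt (verit) norm_ge_zero)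
  have "cmod (f z * u z) = cmod (f z) * cmod (u z)" by (simp add: norm_mult)
  also have "\<dots> \<le> M * (C1 * sqrt (Nq z) ^ \<nu>)" using C1 assms(3) M by (intro mult_mono) auto
  finally show "cmod (f z * u z) \<le> (M * C1) * sqrt (Nq z) ^ \<nu>" by (simp add: ac_simps)
next
  assume [measurable]: "u \<in> borel_measurable borel"
  note assms(2)[measurable]
  show "(\<lambda>z. f z * u z) \<in> borel_measurable borel" by measurable
qed

lemma Bd_cmult: "Bd \<nu> u \<Longrightarrow> Bd \<nu> (\<lambda>z. c * u z)"
  using Bd_mult_bounded[of \<nu> u "\<lambda>_. c" "cmod c"] by simp

lemma Bd_diff: "Bd \<nu> u \<Longrightarrow> Bd \<nu> v \<Longrightarrow> Bd \<nu> (\<lambda>z. u z - v z)"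
  using Bd_add[of \<nu> u "\<lambda>z. (-1) * v z"] Bd_cmult[of \<nu> v "-1"] by simp

lemma Bd_sum: "finite A \<Longrightarrow> (\<And>i. i \<in> A \<Longrightarrow> Bd \<nu> (f i)) \<Longrightarrow> Bd \<nu> (\<lambda>z. \<Sum>i\<in>A. f i z)"
proof (induction A rule: finite_induct)
  case empty
  then show ?case by (simp add: Bd_def) (metis mult_zero_left order_refl)
next
  case (insert x F)
  then show ?case using Bd_add[of \<nu> "f x" "\<lambda>z. \<Sum>i\<in>F. f i z"] by simp
qed

lemma Bd_polyf: "Bd \<nu> (polyf \<nu> a)"
  unfolding polyf_def by (intro Bd_sum Bd_cmult Bd_pow) auto

lemma Bd_cnjpow_integrable:
  assumes "Bd \<nu> u" "k \<le> \<nu>"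
  shows "integrable lborel (\<lambda>z. u z * cnj z ^ k * complex_of_real (iota_dens \<nu> z))"
  using Bd_pair_integrable[OF assms(1) Bd_pow[OF assms(2)]] by simp

lemma binom_expand: "(1 + x * cnj z)^\<nu> = (\<Sum>k\<le>\<nu>. of_nat (\<nu> choose k) * x^k * cnj z^k)"
proof -
  have "(1 + x * cnj z)^\<nu> = (x * cnj z + 1)^\<nu>" by (simp add: add.commute)
  also have "\<dots> = (\<Sum>k\<le>\<nu>. of_nat (\<nu> choose k) * (x * cnj z)^k * 1^(\<nu> - k))"
    by (rule binomial_ring)
  finally show ?thesis by (simp add: power_mult_distrib mult.assoc)
qed

lemma Pop_expand:
  assumes "Bd \<nu> u"
  shows "Pop \<nu> u = polyf \<nu> (\<lambda>k. of_nat (\<nu> choose k) * mom \<nu> u k)"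
proof
  fix x
  have "Pop \<nu> u x = integral\<^sup>L lborel (\<lambda>z. \<Sum>k\<le>\<nu>. (of_nat (\<nu> choose k) * x^k) *
            (u z * cnj z ^ k * complex_of_real (iota_dens \<nu> z)))"
    unfolding Pop_def binom_expand
    by (intro Bochner_Integration.integral_cong refl) (simp add: sum_distrib_left sum_distrib_right mult_ac)
  also have "\<dots> = (\<Sum>k\<le>\<nu>. integral\<^sup>L lborel (\<lambda>z. (of_nat (\<nu> choose k) * x^k) *
            (u z * cnj z ^ k * complex_of_real (iota_dens \<nu> z))))"
    by (rule Bochner_Integration.integral_sum[where f="\<lambda>k z. (of_nat (\<nu> choose k) * x^k) *
            (u z * cnj z ^ k * complex_of_real (iota_dens \<nu> z))"]) (auto intro!: integrable_mult_right Bd_cnjpow_integrable assms)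
  also have "\<dots> = (\<Sum>k\<le>\<nu>. (of_nat (\<nu> choose k) * mom \<nu> u k) * x^k)"
    by (intro sum.cong refl) (simp only: integral_mult_right_zero, simp add: mom_def Wt_def mult_ac)
  finally show "Pop \<nu> u x = polyf \<nu> (\<lambda>k. of_nat (\<nu> choose k) * mom \<nu> u k) x"
    by (simp add: polyf_def)
qed

lemma mom_polyf:
  assumes "k \<le> \<nu>"
  shows "mom \<nu> (polyf \<nu> a) k = a k / of_nat (\<nu> choose k)"
proof -
  have "mom \<nu> (polyf \<nu> a) k = integral\<^sup>L lborel (\<lambda>z. \<Sum>j\<le>\<nu>. a j * (z^j * cnj z ^ k * complex_of_real (iota_dens \<nu> z)))"
    unfolding mom_def Wt_def polyf_def by (simp add: sum_distrib_right mult.assoc)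
  also have "\<dots> = (\<Sum>j\<le>\<nu>. integral\<^sup>L lborel (\<lambda>z. a j * (z^j * cnj z ^ k * complex_of_real (iota_dens \<nu> z))))"
    by (rule Bochner_Integration.integral_sum[where f="\<lambda>j z. a j * (z^j * cnj z ^ k * complex_of_real (iota_dens \<nu> z))"]) (auto intro!: integrable_mult_right Bd_cnjpow_integrable Bd_pow assms)
  also have "\<dots> = (\<Sum>j\<le>\<nu>. a j * (if j = k then 1 / of_nat (\<nu> choose k) else 0))"
    using assms by (intro sum.cong refl) (simp add: moment)
  also have "\<dots> = a k / of_nat (\<nu> choose k)"
    using assms by (simp add: if_distrib cong: if_cong)
  finally show ?thesis .
qed

lemma polyf_cong: "(\<And>k. k \<le> \<nu> \<Longrightarrow> a k = b k) \<Longrightarrow> polyf \<nu> a = polyf \<nu> b"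
  unfolding polyf_def by (intro ext sum.cong refl) auto

lemma Pop_polyf: "Pop \<nu> (polyf \<nu> a) = polyf \<nu> a"
proof -
  have "Pop \<nu> (polyf \<nu> a) = polyf \<nu> (\<lambda>k. of_nat (\<nu> choose k) * mom \<nu> (polyf \<nu> a) k)"
    by (rule Pop_expand[OF Bd_polyf])
  also have "\<dots> = polyf \<nu> a"
    by (intro polyf_cong) (simp add: mom_polyf)
  finally show ?thesis .
qed

lemma ip_polyf:
  assumes "Bd \<nu> u"
  shows "ip \<nu> u (polyf \<nu> b) = (\<Sum>k\<le>\<nu>. cnj (b k) * mom \<nu> u k)"
proof -
  have "ip \<nu> u (polyf \<nu> b) = integral\<^sup>L lborel (\<lambda>z. \<Sum>k\<le>\<nu>. cnj (b k) * (u z * cnj z ^ k * complex_of_real (iota_dens \<nu> z)))"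
    unfolding ip_def Wt_def polyf_def
    by (intro Bochner_Integration.integral_cong refl) (simp add: sum_distrib_right sum_distrib_left mult_ac)
  also have "\<dots> = (\<Sum>k\<le>\<nu>. integral\<^sup>L lborel (\<lambda>z. cnj (b k) * (u z * cnj z ^ k * complex_of_real (iota_dens \<nu> z))))"
    by (rule Bochner_Integration.integral_sum[where f="\<lambda>k z. cnj (b k) * (u z * cnj z ^ k * complex_of_real (iota_dens \<nu> z))"]) (auto intro!: integrable_mult_right Bd_cnjpow_integrable assms)
  also have "\<dots> = (\<Sum>k\<le>\<nu>. cnj (b k) * mom \<nu> u k)"
    by (simp add: mom_def Wt_def)
  finally show ?thesis .
qed

lemma ip_Pop:
  assumes "Bd \<nu> u"
  shows "ip \<nu> (Pop \<nu> u) (polyf \<nu> b) = ip \<nu> u (polyf \<nu> b)"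
proof -
  have P: "Pop \<nu> u = polyf \<nu> (\<lambda>k. of_nat (\<nu> choose k) * mom \<nu> u k)" by (rule Pop_expand[OF assms])
  have "ip \<nu> (Pop \<nu> u) (polyf \<nu> b) = (\<Sum>k\<le>\<nu>. cnj (b k) * mom \<nu> (Pop \<nu> u) k)"
    unfolding P by (rule ip_polyf[OF Bd_polyf])
  also have "\<dots> = (\<Sum>k\<le>\<nu>. cnj (b k) * mom \<nu> u k)"
    unfolding P by (intro sum.cong refl) (simp add: mom_polyf)
  also have "\<dots> = ip \<nu> u (polyf \<nu> b)" by (rule ip_polyf[OF assms, symmetric])
  finally show ?thesis .
qed

lemma ip_self: "ip \<nu> u u = complex_of_real (N2 \<nu> u)"
proof -
  have "ip \<nu> u u = integral\<^sup>L lborel (\<lambda>z. complex_of_real ((cmod (u z))^2 * iota_dens \<nu> z))"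
  proof -
    have "\<And>z. u z * cnj (u z) = complex_of_real ((cmod (u z))^2)" by (metis complex_norm_square of_real_power)
    then show ?thesis unfolding ip_def Wt_def by simp
  qed
  also have "\<dots> = complex_of_real (N2 \<nu> u)" unfolding N2_def by (rule integral_complex_of_real)
  finally show ?thesis .
qed

lemma N2_nonneg: "N2 \<nu> u \<ge> 0"
  unfolding N2_def by (intro integral_nonneg_AE AE_I2 mult_nonneg_nonneg iota_dens_nonneg) auto

lemma quad_lemma:
  fixes A B X :: real
  assumes "\<And>t. 0 \<le> t^2 * A - 2 * t * X + B" "A \<ge> 0" "X \<ge> 0"
  shows "X^2 \<le> A * B"
proof (cases "A = 0")
  case True
  show ?thesis
  proof (rule ccontr)
    assume "\<not> X^2 \<le> A * B"
    then have "X > 0" using True assms(3) by auto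
    have "0 \<le> ((B + 1) / (2 * X))^2 * A - 2 * ((B + 1) / (2 * X)) * X + B" by (rule assms(1))
    then show False using True \<open>X > 0\<close> by (simp add: field_simps)
  qed
next
  case False
  then have Ap: "A > 0" using assms(2) by simp
  have "0 \<le> (X / A)^2 * A - 2 * (X / A) * X + B" by (rule assms(1))
  also have "(X / A)^2 * A - 2 * (X / A) * X + B = B - X^2 / A"
    using Ap by (simp add: field_simps power2_eq_square)
  finally have "X^2 / A \<le> B" by simp
  then show ?thesis using Ap by (simp add: field_simps mult.commute)
qed

lemma cauchy_schwarz_ip:
  assumes u: "Bd \<nu> u" and v: "Bd \<nu> v"
  shows "(cmod (ip \<nu> u v))^2 \<le> N2 \<nu> u * N2 \<nu> v"
proof -
  define X where "X = integral\<^sup>L lborel (\<lambda>z. cmod (u z) * cmod (v z) * iota_dens \<nu> z)"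
  have iuv: "integrable lborel (\<lambda>z. cmod (u z) * cmod (v z) * iota_dens \<nu> z)" by (rule Bd_realsq_integrable[OF u v])
  have iuu: "integrable lborel (\<lambda>z. cmod (u z) * cmod (u z) * iota_dens \<nu> z)" by (rule Bd_realsq_integrable[OF u u])
  have ivv: "integrable lborel (\<lambda>z. cmod (v z) * cmod (v z) * iota_dens \<nu> z)" by (rule Bd_realsq_integrable[OF v v])
  have le: "cmod (ip \<nu> u v) \<le> X"
  proof -
    have "cmod (ip \<nu> u v) \<le> integral\<^sup>L lborel (\<lambda>z. norm (u z * cnj (v z) * complex_of_real (iota_dens \<nu> z)))"
      unfolding ip_def Wt_def by (rule integral_norm_bound)
    also have "\<dots> = X" unfolding X_def
      by (intro Bochner_Integration.integral_cong refl) (simp add: norm_mult iota_dens_nonneg)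
    finally show ?thesis .
  qed
  have X0: "X \<ge> 0" using le norm_ge_zero order_trans by blast
  have q: "0 \<le> t^2 * N2 \<nu> u - 2 * t * X + N2 \<nu> v" for t
  proof -
    have "0 \<le> integral\<^sup>L lborel (\<lambda>z. (t * cmod (u z) - cmod (v z))^2 * iota_dens \<nu> z)"
      by (intro integral_nonneg_AE AE_I2 mult_nonneg_nonneg iota_dens_nonneg) auto
    also have "(\<lambda>z. (t * cmod (u z) - cmod (v z))^2 * iota_dens \<nu> z) =
        (\<lambda>z. t^2 * (cmod (u z) * cmod (u z) * iota_dens \<nu> z) - 2 * t * (cmod (u z) * cmod (v z) * iota_dens \<nu> z)
             + cmod (v z) * cmod (v z) * iota_dens \<nu> z)"
      by (rule ext) (simp add: power2_eq_square algebra_simps)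
    also have "integral\<^sup>L lborel \<dots> = t^2 * N2 \<nu> u - 2 * t * X + N2 \<nu> v"
      using iuu iuv ivv unfolding N2_def X_def by (simp add: power2_eq_square)
    finally show ?thesis .
  qed
  have "X^2 \<le> N2 \<nu> u * N2 \<nu> v" by (rule quad_lemma[OF q N2_nonneg X0])
  moreover have "(cmod (ip \<nu> u v))^2 \<le> X^2" using le by (intro power_mono) auto
  ultimately show ?thesis by linarith
qed

lemma N2_Pop:
  assumes "Bd \<nu> u"
  shows "N2 \<nu> (Pop \<nu> u) \<le> N2 \<nu> u"
proof -
  define c where "c = (\<lambda>k. of_nat (\<nu> choose k) * mom \<nu> u k)"
  have P: "Pop \<nu> u = polyf \<nu> c" unfolding c_def by (rule Pop_expand[OF assms])
  have "complex_of_real (N2 \<nu> (Pop \<nu> u)) = ip \<nu> (Pop \<nu> u) (Pop \<nu> u)" by (rule ip_self[symmetric])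
  also have "\<dots> = ip \<nu> u (Pop \<nu> u)"
  proof -
    have "ip \<nu> (Pop \<nu> u) (polyf \<nu> c) = ip \<nu> u (polyf \<nu> c)" by (rule ip_Pop[OF assms])
    then show ?thesis unfolding P .
  qed
  finally have e: "complex_of_real (N2 \<nu> (Pop \<nu> u)) = ip \<nu> u (Pop \<nu> u)" .
  have "(N2 \<nu> (Pop \<nu> u))^2 = (cmod (ip \<nu> u (Pop \<nu> u)))^2"
    unfolding e[symmetric] using N2_nonneg by simp
  also have "\<dots> \<le> N2 \<nu> u * N2 \<nu> (Pop \<nu> u)"
    by (rule cauchy_schwarz_ip[OF assms]) (simp add: P Bd_polyf)
  finally have h: "N2 \<nu> (Pop \<nu> u) * N2 \<nu> (Pop \<nu> u) \<le> N2 \<nu> u * N2 \<nu> (Pop \<nu> u)"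
    by (simp add: power2_eq_square)
  show ?thesis
  proof (cases "N2 \<nu> (Pop \<nu> u) = 0")
    case True then show ?thesis using N2_nonneg[of \<nu> u] by simp
  next
    case False
    then have "N2 \<nu> (Pop \<nu> u) > 0" using N2_nonneg[of \<nu> "Pop \<nu> u"] by simp
    then show ?thesis using h by (simp add: mult_le_cancel_right)
  qed
qed

definition Kf :: "nat \<Rightarrow> complex \<Rightarrow> complex \<Rightarrow> complex" where
  "Kf \<nu> w = (\<lambda>z. (1 + z * cnj w)^\<nu>)"

lemma Kf_polyf: "Kf \<nu> w = polyf \<nu> (\<lambda>k. of_nat (\<nu> choose k) * cnj w ^ k)"
proof
  fix z
  have "Kf \<nu> w z = (z * cnj w + 1)^\<nu>" by (simp add: Kf_def add.commute)
  also have "\<dots> = (\<Sum>k\<le>\<nu>. of_nat (\<nu> choose k) * (z * cnj w)^k * 1^(\<nu> - k))"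
    by (rule binomial_ring)
  finally show "Kf \<nu> w z = polyf \<nu> (\<lambda>k. of_nat (\<nu> choose k) * cnj w ^ k) z"
    by (simp add: polyf_def power_mult_distrib mult_ac)
qed

lemma Bd_Kf: "Bd \<nu> (Kf \<nu> w)"
  unfolding Kf_polyf by (rule Bd_polyf)

lemma Pop_eval: "Pop \<nu> u w = ip \<nu> u (Kf \<nu> w)"
  unfolding Pop_def ip_def Wt_def Kf_def by (simp add: mult.commute)

lemma Kf_diag: "Kf \<nu> w w = complex_of_real (Nq w ^ \<nu>)"
  by (simp add: Kf_def Nq_def complex_norm_square[symmetric])

lemma N2_Kf: "N2 \<nu> (Kf \<nu> w) = Nq w ^ \<nu>"
proof -
  have "complex_of_real (N2 \<nu> (Kf \<nu> w)) = ip \<nu> (Kf \<nu> w) (Kf \<nu> w)" by (rule ip_self[symmetric])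
  also have "\<dots> = Pop \<nu> (Kf \<nu> w) w" by (rule Pop_eval[symmetric])
  also have "\<dots> = Kf \<nu> w w" unfolding Kf_polyf Pop_polyf ..
  also have "\<dots> = complex_of_real (Nq w ^ \<nu>)" by (rule Kf_diag)
  finally show ?thesis by (metis of_real_eq_iff)
qed

lemma ip_lin:
  assumes "Bd \<nu> u" "Bd \<nu> v" "Bd \<nu> w"
  shows "ip \<nu> (\<lambda>z. u z - c * v z) w = ip \<nu> u w - c * ip \<nu> v w"
proof -
  have "ip \<nu> (\<lambda>z. u z - c * v z) w = integral\<^sup>L lborel (\<lambda>z. u z * cnj (w z) * complex_of_real (iota_dens \<nu> z)
     - c * (v z * cnj (w z) * complex_of_real (iota_dens \<nu> z)))"
    unfolding ip_def Wt_def by (intro Bochner_Integration.integral_cong refl) (simp add: algebra_simps)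
  also have "\<dots> = ip \<nu> u w - c * ip \<nu> v w"
    using Bd_pair_integrable[OF assms(1,3)] Bd_pair_integrable[OF assms(2,3)]
    unfolding ip_def Wt_def by simp
  finally show ?thesis .
qed

lemma Pop_lin:
  assumes "Bd \<nu> u" "Bd \<nu> v"
  shows "Pop \<nu> (\<lambda>z. u z - c * v z) = (\<lambda>x. Pop \<nu> u x - c * Pop \<nu> v x)"
  by (rule ext) (simp add: Pop_eval ip_lin[OF assms Bd_Kf])

lemma Bd_Pop: "Bd \<nu> u \<Longrightarrow> Bd \<nu> (Pop \<nu> u)"
  by (simp add: Pop_expand Bd_polyf)

lemma Pop_Bd_polyf: "Bd \<nu> u \<Longrightarrow> \<exists>c. Pop \<nu> u = polyf \<nu> c"
  using Pop_expand by blast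

definition Tf :: "nat \<Rightarrow> (complex \<Rightarrow> complex) \<Rightarrow> (complex \<Rightarrow> complex) \<Rightarrow> (complex \<Rightarrow> complex)" where
  "Tf \<nu> f h = Pop \<nu> (\<lambda>z. f z * h z)"

context
  fixes f :: "complex \<Rightarrow> complex" and M :: real
  assumes fm[measurable]: "f \<in> borel_measurable borel" and fb: "\<And>z. cmod (f z) \<le> M"
begin

lemma M_nonneg: "M \<ge> 0" using fb[of 0] by (smt (verit) norm_ge_zero)

lemma Bd_fmult: "Bd \<nu> h \<Longrightarrow> Bd \<nu> (\<lambda>z. f z * h z)"
  by (rule Bd_mult_bounded[OF _ fm fb])

lemma Bd_Tf: "Bd \<nu> h \<Longrightarrow> Bd \<nu> (Tf \<nu> f h)"
  unfolding Tf_def by (intro Bd_Pop Bd_fmult)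

lemma Bd_Tf_iter: "Bd \<nu> h \<Longrightarrow> Bd \<nu> ((Tf \<nu> f ^^ n) h)"
  by (induction n) (auto intro: Bd_Tf)

lemma Tf_lin:
  assumes "Bd \<nu> u" "Bd \<nu> v"
  shows "Tf \<nu> f (\<lambda>z. u z - c * v z) = (\<lambda>x. Tf \<nu> f u x - c * Tf \<nu> f v x)"
proof -
  have "Tf \<nu> f (\<lambda>z. u z - c * v z) = Pop \<nu> (\<lambda>z. f z * u z - c * (f z * v z))"
    unfolding Tf_def by (simp add: algebra_simps)
  also have "\<dots> = (\<lambda>x. Tf \<nu> f u x - c * Tf \<nu> f v x)"
    unfolding Tf_def by (rule Pop_lin[OF Bd_fmult[OF assms(1)] Bd_fmult[OF assms(2)]])
  finally show ?thesis .
qed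

lemma Tf_iter_lin:
  assumes "Bd \<nu> u" "Bd \<nu> v"
  shows "(Tf \<nu> f ^^ n) (\<lambda>z. u z - c * v z) = (\<lambda>x. (Tf \<nu> f ^^ n) u x - c * (Tf \<nu> f ^^ n) v x)"
proof (induction n)
  case 0 then show ?case by simp
next
  case (Suc n)
  show ?case
    using Tf_lin[OF Bd_Tf_iter[OF assms(1)] Bd_Tf_iter[OF assms(2)], of n c] Suc by simp
qed

lemma N2_fmult:
  assumes "Bd \<nu> h"
  shows "N2 \<nu> (\<lambda>z. f z * h z) \<le> M^2 * N2 \<nu> h"
proof -
  have i1: "integrable lborel (\<lambda>z. cmod (f z * h z) * cmod (f z * h z) * iota_dens \<nu> z)"
    by (rule Bd_realsq_integrable[OF Bd_fmult[OF assms] Bd_fmult[OF assms]])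
  have i2: "integrable lborel (\<lambda>z. cmod (h z) * cmod (h z) * iota_dens \<nu> z)"
    by (rule Bd_realsq_integrable[OF assms assms])
  have "N2 \<nu> (\<lambda>z. f z * h z) = integral\<^sup>L lborel (\<lambda>z. cmod (f z * h z) * cmod (f z * h z) * iota_dens \<nu> z)"
    unfolding N2_def by (simp add: power2_eq_square)
  also have "\<dots> \<le> integral\<^sup>L lborel (\<lambda>z. M^2 * (cmod (h z) * cmod (h z) * iota_dens \<nu> z))"
  proof (rule integral_mono[OF i1 integrable_mult_right[OF i2]])
    fix z
    have "cmod (f z * h z) * cmod (f z * h z) = (cmod (f z))^2 * (cmod (h z) * cmod (h z))"
      by (simp add: norm_mult power2_eq_square)
    also have "\<dots> \<le> M^2 * (cmod (h z) * cmod (h z))"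
      by (intro mult_right_mono power_mono fb) auto
    finally show "cmod (f z * h z) * cmod (f z * h z) * iota_dens \<nu> z \<le> M^2 * (cmod (h z) * cmod (h z) * iota_dens \<nu> z)"
      using iota_dens_nonneg[of \<nu> z] by (simp add: mult_right_mono mult.assoc[symmetric])
  qed
  also have "\<dots> = M^2 * N2 \<nu> h" unfolding N2_def by (simp add: power2_eq_square)
  finally show ?thesis .
qed

lemma N2_Tf:
  assumes "Bd \<nu> h"
  shows "N2 \<nu> (Tf \<nu> f h) \<le> M^2 * N2 \<nu> h"
  unfolding Tf_def using N2_Pop[OF Bd_fmult[OF assms]] N2_fmult[OF assms] by linarith

lemma N2_Tf_iter:
  assumes "Bd \<nu> h"
  shows "N2 \<nu> ((Tf \<nu> f ^^ n) h) \<le> M^(2*n) * N2 \<nu> h"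
proof (induction n)
  case 0 then show ?case by simp
next
  case (Suc n)
  have "N2 \<nu> ((Tf \<nu> f ^^ Suc n) h) \<le> M^2 * N2 \<nu> ((Tf \<nu> f ^^ n) h)"
    using N2_Tf[OF Bd_Tf_iter[OF assms]] by simp
  also have "\<dots> \<le> M^2 * (M^(2*n) * N2 \<nu> h)"
    by (intro mult_left_mono Suc.IH) auto
  also have "\<dots> = M^(2 * Suc n) * N2 \<nu> h"
  proof -
    have e: "M^(2 * Suc n) = M^2 * M^(2*n)" by (metis mult_Suc_right power_add)
    show ?thesis by (simp only: e mult.assoc)
  qed
  finally show ?case .
qed

lemma iter_polyf: "\<exists>c. (Tf \<nu> f ^^ n) (polyf \<nu> c0) = polyf \<nu> c"
proof (cases n)
  case 0 then show ?thesis by auto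
next
  case (Suc m)
  then show ?thesis using Pop_Bd_polyf[OF Bd_fmult[OF Bd_Tf_iter[OF Bd_polyf[of \<nu> c0], where n=m]]]
    by (auto simp: Tf_def)
qed

lemma eval_bound:
  shows "cmod ((Tf \<nu> f ^^ n) (polyf \<nu> c0) w) \<le> M^n * sqrt (N2 \<nu> (polyf \<nu> c0) * Nq w ^ \<nu>)"
proof -
  obtain c where c: "(Tf \<nu> f ^^ n) (polyf \<nu> c0) = polyf \<nu> c" using iter_polyf by blast
  have "(Tf \<nu> f ^^ n) (polyf \<nu> c0) w = ip \<nu> ((Tf \<nu> f ^^ n) (polyf \<nu> c0)) (Kf \<nu> w)"
    unfolding c Pop_eval[symmetric] Pop_polyf ..
  then have "(cmod ((Tf \<nu> f ^^ n) (polyf \<nu> c0) w))^2 \<le> N2 \<nu> ((Tf \<nu> f ^^ n) (polyf \<nu> c0)) * N2 \<nu> (Kf \<nu> w)"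
    using cauchy_schwarz_ip[OF Bd_Tf_iter[OF Bd_polyf] Bd_Kf] by simp
  also have "\<dots> \<le> (M^(2*n) * N2 \<nu> (polyf \<nu> c0)) * Nq w ^ \<nu>"
    unfolding N2_Kf using Nq_pos[of w]
    by (intro mult_right_mono N2_Tf_iter Bd_polyf) auto
  also have "\<dots> = (M^n)^2 * (N2 \<nu> (polyf \<nu> c0) * Nq w ^ \<nu>)"
    by (simp add: power_mult[symmetric] mult.commute mult.assoc)
  finally have "cmod ((Tf \<nu> f ^^ n) (polyf \<nu> c0) w) \<le> sqrt ((M^n)^2 * (N2 \<nu> (polyf \<nu> c0) * Nq w ^ \<nu>))"
    by (rule real_le_rsqrt)
  also have "\<dots> = M^n * sqrt (N2 \<nu> (polyf \<nu> c0) * Nq w ^ \<nu>)"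
    using M_nonneg by (simp add: real_sqrt_mult)
  finally show ?thesis .
qed

lemma main_bound:
  assumes M1: "M \<ge> 1"
  shows "cmod ((Tf \<nu> f ^^ n) (Kf \<nu> w) w - f w ^ n * Kf \<nu> w w)
     \<le> real n * M^n * sqrt (N2 \<nu> (\<lambda>z. (f z - f w) * Kf \<nu> w z) * Nq w ^ \<nu>)"
proof -
  define a where "a = f w"
  define h where "h = Kf \<nu> w"
  define g where "g = (\<lambda>z. (f z - a) * h z)"
  define S where "S = sqrt (N2 \<nu> g * Nq w ^ \<nu>)"
  define v where "v = Pop \<nu> g"
  have Bh: "Bd \<nu> h" unfolding h_def by (rule Bd_Kf)
  have Bg: "Bd \<nu> g" unfolding g_def
  proof (rule Bd_mult_bounded[OF Bh])
    show "(\<lambda>z. f z - a) \<in> borel_measurable borel" by measurable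
    fix z show "cmod (f z - a) \<le> M + cmod a"
      using norm_triangle_ineq4[of "f z" a] fb[of z] by linarith
  qed
  have Bv: "Bd \<nu> v" unfolding v_def by (rule Bd_Pop[OF Bg])
  obtain c0 where c0: "v = polyf \<nu> c0" unfolding v_def using Pop_Bd_polyf[OF Bg] by blast
  have hp: "Pop \<nu> h = h" unfolding h_def Kf_polyf Pop_polyf ..
  have Th: "Tf \<nu> f h = (\<lambda>x. v x - (- a) * h x)"
  proof -
    have "Tf \<nu> f h = Pop \<nu> (\<lambda>z. g z - (- a) * h z)"
      unfolding Tf_def g_def by (simp add: algebra_simps)
    also have "\<dots> = (\<lambda>x. v x - (- a) * h x)"
      unfolding Pop_lin[OF Bg Bh] v_def hp ..
    finally show ?thesis .
  qed
  have S0: "S \<ge> 0" unfolding S_def using N2_nonneg[of \<nu> g] Nq_pos[of w] by simp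
  have aM: "cmod a \<le> M" unfolding a_def by (rule fb)
  have vb: "cmod ((Tf \<nu> f ^^ n) v w) \<le> M^n * S" for n
  proof -
    have "cmod ((Tf \<nu> f ^^ n) v w) \<le> M^n * sqrt (N2 \<nu> v * Nq w ^ \<nu>)"
      unfolding c0 by (rule eval_bound)
    also have "\<dots> \<le> M^n * S" unfolding S_def v_def using M_nonneg Nq_pos[of w] N2_Pop[OF Bg]
      by (intro mult_left_mono real_sqrt_le_mono mult_right_mono) auto
    finally show ?thesis .
  qed
  have "cmod ((Tf \<nu> f ^^ n) h w - a ^ n * h w) \<le> real n * M^n * S"
  proof (induction n)
    case 0 then show ?case by simp
  next
    case (Suc n)
    have "(Tf \<nu> f ^^ Suc n) h = (Tf \<nu> f ^^ n) (Tf \<nu> f h)" by (simp only: funpow_Suc_right comp_def)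
    also have "\<dots> = (\<lambda>x. (Tf \<nu> f ^^ n) v x - (- a) * (Tf \<nu> f ^^ n) h x)"
      unfolding Th by (rule Tf_iter_lin[OF Bv Bh])
    finally have e: "(Tf \<nu> f ^^ Suc n) h w - a ^ Suc n * h w = (Tf \<nu> f ^^ n) v w + a * ((Tf \<nu> f ^^ n) h w - a ^ n * h w)"
      by (simp add: algebra_simps)
    have "cmod ((Tf \<nu> f ^^ Suc n) h w - a ^ Suc n * h w) \<le> cmod ((Tf \<nu> f ^^ n) v w) + cmod a * cmod ((Tf \<nu> f ^^ n) h w - a ^ n * h w)"
      unfolding e by (metis norm_mult norm_triangle_ineq)
    also have "\<dots> \<le> M^n * S + M * (real n * M^n * S)"
      using vb[of n] Suc.IH aM M_nonneg by (intro add_mono mult_mono) auto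
    also have "\<dots> \<le> M^Suc n * S + M * (real n * M^n * S)"
      using S0 M1 by (intro add_mono mult_right_mono power_increasing) auto
    also have "\<dots> = real (Suc n) * M ^ Suc n * S" by (simp add: algebra_simps)
    finally show ?case .
  qed
  then show ?thesis unfolding a_def h_def g_def S_def .
qed

end

lemma kernel_identity: "(cmod (1 + z * cnj w))^2 + (cmod (z - w))^2 = Nq z * Nq w"
  unfolding Nq_def cmod_power2 by (simp add: power2_eq_square algebra_simps)

lemma far_apart:
  assumes "R \<ge> 0" "cmod w \<le> R" "cmod z \<ge> 2 * R + 1"
  shows "Nq z \<le> 4 * (cmod (z - w))^2"
proof -
  have "cmod (z - w) \<ge> cmod z - cmod w" by (rule norm_triangle_ineq2)
  then have "cmod z + 1 \<le> 2 * cmod (z - w)" using assms by linarith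
  then have h: "cmod (z - w) \<ge> (cmod z + 1) / 2" by simp
  have h0: "(cmod z + 1) / 2 \<ge> 0" by simp
  have "((cmod z + 1) / 2)^2 \<le> (cmod (z - w))^2" by (rule power_mono[OF h h0])
  moreover have "Nq z \<le> 4 * ((cmod z + 1) / 2)^2"
    by (simp add: Nq_def power2_eq_square field_simps)
  ultimately show ?thesis by linarith
qed

lemma cont_CP1_bounded:
  assumes "cont_CP1 f"
  shows "\<exists>M. \<forall>z. cmod (f z) \<le> M"
proof -
  from assms obtain L where c: "continuous_on UNIV f" and L: "(f \<longlongrightarrow> L) at_infinity"
    by (auto simp: cont_CP1_def)
  have "\<forall>\<^sub>F z in at_infinity. dist (f z) L < 1" using L by (rule tendstoD) simp
  then obtain R where R: "\<And>z. R \<le> norm z \<Longrightarrow> dist (f z) L < 1"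
    by (auto simp: eventually_at_infinity)
  have "compact (f ` cball 0 R)"
    by (rule compact_continuous_image) (use c continuous_on_subset in auto)
  then obtain B where B: "\<And>y. y \<in> f ` cball 0 R \<Longrightarrow> norm y \<le> B"
    using compact_imp_bounded bounded_iff by metis
  show ?thesis
  proof (intro exI allI)
    fix z
    show "cmod (f z) \<le> max B (cmod L + 1)"
    proof (cases "norm z \<le> R")
      case True then show ?thesis using B[of "f z"] by auto
    next
      case False
      then have "dist (f z) L < 1" using R by auto
      then have "cmod (f z) \<le> cmod L + 1" using norm_triangle_ineq2[of "f z" L] by (simp add: dist_norm)
      then show ?thesis by simp
    qed
  qed
qed

lemma chordal_uc:
  assumes "cont_CP1 f" "e > 0"
  shows "\<exists>\<delta>>0. \<delta> < 1 \<and> (\<forall>z w. (cmod (z - w))^2 < \<delta> * (Nq z * Nq w) \<longrightarrow> cmod (f z - f w) < e)"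
proof -
  from assms obtain L where c: "continuous_on UNIV f" and L: "(f \<longlongrightarrow> L) at_infinity"
    by (auto simp: cont_CP1_def)
  have "\<forall>\<^sub>F z in at_infinity. dist (f z) L < e / 2" using L by (rule tendstoD) (use assms in simp)
  then obtain R0 where R0: "\<And>z. R0 \<le> norm z \<Longrightarrow> dist (f z) L < e / 2"
    by (auto simp: eventually_at_infinity)
  define R where "R = max R0 1"
  have R: "\<And>z. R \<le> norm z \<Longrightarrow> dist (f z) L < e / 2" using R0 by (auto simp: R_def)
  have R1: "R \<ge> 1" by (simp add: R_def)
  define S where "S = cball (0::complex) (2 * R + 1)"
  have "uniformly_continuous_on S f"
    by (rule compact_uniformly_continuous) (use c continuous_on_subset in \<open>auto simp: S_def\<close>)
  then obtain d where d: "d > 0" and dd: "\<And>x x'. x \<in> S \<Longrightarrow> x' \<in> S \<Longrightarrow> dist x' x < d \<Longrightarrow> dist (f x') (f x) < e"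
    unfolding uniformly_continuous_on_def using assms(2) by metis
  define Q where "Q = 1 + (2 * R + 1)^2"
  have Q1: "Q \<ge> 1" by (simp add: Q_def)
  define \<delta> where "\<delta> = min (1/2) (min (d^2 / Q^2) (1 / (4 * (1 + R^2))))"
  have \<delta>pos: "\<delta> > 0" using d Q1 by (simp add: \<delta>_def add_pos_nonneg)
  have \<delta>1: "\<delta> < 1" by (simp add: \<delta>_def)
  have \<delta>2: "\<delta> \<le> d^2 / Q^2" and \<delta>3: "\<delta> \<le> 1 / (4 * (1 + R^2))" by (simp_all add: \<delta>_def)
  have key: "cmod (f z - f w) < e" if h: "(cmod (z - w))^2 < \<delta> * (Nq z * Nq w)" for z w
  proof -
    have far: False if "cmod w \<le> R" "cmod z \<ge> 2 * R + 1"
      and hh: "(cmod (z - w))^2 < \<delta> * (Nq z * Nq w)" for z w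
    proof -
      have a: "Nq z \<le> 4 * (cmod (z - w))^2" by (rule far_apart) (use that R1 in auto)
      have "Nq w \<le> 1 + R^2" using that(1) by (simp add: Nq_def power_mono)
      then have "\<delta> * Nq w \<le> (1 / (4 * (1 + R^2))) * (1 + R^2)"
        using \<delta>3 \<delta>pos Nq_pos[of w] by (intro mult_mono) auto
      also have "\<dots> = 1 / 4"
      proof -
        have "(4::real) + 4 * R^2 > 0" by (simp add: add_pos_nonneg)
        then show ?thesis by (simp add: field_simps)
      qed
      finally have "\<delta> * (Nq z * Nq w) \<le> Nq z / 4"
        using Nq_pos[of z] by (simp add: mult.left_commute mult_left_mono)
      then show False using a hh by linarith
    qed
    consider "cmod z \<ge> R \<and> cmod w \<ge> R" | "cmod z \<le> 2 * R + 1 \<and> cmod w \<le> 2 * R + 1"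
      | "cmod w \<le> R \<and> cmod z \<ge> 2 * R + 1" | "cmod z \<le> R \<and> cmod w \<ge> 2 * R + 1"
      by linarith
    then show ?thesis
    proof cases
      case 1
      then have "dist (f z) L < e / 2" "dist (f w) L < e / 2" using R by auto
      then show ?thesis using dist_triangle_half_l[of "f z" L e "f w"] by (simp add: dist_norm dist_commute)
    next
      case 2
      then have zs: "z \<in> S" and ws: "w \<in> S" by (auto simp: S_def)
      have nz: "Nq z \<le> Q" and nw: "Nq w \<le> Q" using 2 by (auto simp: Nq_def Q_def intro!: power_mono)
      have "(cmod (z - w))^2 < \<delta> * (Nq z * Nq w)" by (rule h)
      also have "\<dots> \<le> (d^2 / Q^2) * (Q * Q)"
        using \<delta>2 \<delta>pos nz nw Nq_pos[of z] Nq_pos[of w] by (intro mult_mono) auto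
      also have "\<dots> = d^2" using Q1 by (simp add: power2_eq_square)
      finally have "cmod (z - w) < d" using d by (simp add: power_less_imp_less_base)
      then show ?thesis using dd[OF ws zs] by (simp add: dist_norm)
    next
      case 3 then show ?thesis using far[of w z] h by auto
    next
      case 4
      have "(cmod (w - z))^2 < \<delta> * (Nq w * Nq z)" using h by (simp add: norm_minus_commute mult.commute)
      then show ?thesis using far[of z w] 4 by auto
    qed
  qed
  show ?thesis using \<delta>pos \<delta>1 key by blast
qed

lemma int_Nq_pow:
  "integrable lborel (\<lambda>z. Nq z ^ \<nu> * iota_dens \<nu> z)"
  "integral\<^sup>L lborel (\<lambda>z. Nq z ^ \<nu> * iota_dens \<nu> z) = real \<nu> + 1"
proof -
  have eq: "(\<lambda>z. Nq z ^ \<nu> * iota_dens \<nu> z) = (\<lambda>z. ((real \<nu> + 1) / pi) * (1 / Nq z ^ 2))"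
  proof
    fix z
    have "Nq z > 0" by (rule Nq_pos)
    then show "Nq z ^ \<nu> * iota_dens \<nu> z = ((real \<nu> + 1) / pi) * (1 / Nq z ^ 2)"
      by (simp add: iota_dens_eq power_add field_simps power2_eq_square)
  qed
  show "integrable lborel (\<lambda>z. Nq z ^ \<nu> * iota_dens \<nu> z)"
    unfolding eq by (rule integrable_mult_right[OF weight2_integrable])
  show "integral\<^sup>L lborel (\<lambda>z. Nq z ^ \<nu> * iota_dens \<nu> z) = real \<nu> + 1"
    unfolding eq integral_mult_right_zero weight2_integral by simp
qed

lemma concentration:
  assumes fm[measurable]: "f \<in> borel_measurable borel" and fb: "\<And>z. cmod (f z) \<le> M"
    and \<delta>: "\<delta> > 0" "\<delta> < 1" and e: "e \<ge> 0"
    and uc: "\<And>z w. (cmod (z - w))^2 < \<delta> * (Nq z * Nq w) \<Longrightarrow> cmod (f z - f w) < e"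
  shows "N2 \<nu> (\<lambda>z. (f z - f w) * Kf \<nu> w z) \<le> Nq w ^ \<nu> * (e^2 + 4 * M^2 * (real \<nu> + 1) * (1 - \<delta>)^\<nu>)"
proof -
  define c where "c = 4 * M^2 * (1 - \<delta>)^\<nu> * Nq w ^ \<nu>"
  have M0: "M \<ge> 0" using fb[of 0] by (smt (verit) norm_ge_zero)
  have Bg: "Bd \<nu> (\<lambda>z. (f z - f w) * Kf \<nu> w z)"
  proof (rule Bd_mult_bounded[OF Bd_Kf])
    show "(\<lambda>z. f z - f w) \<in> borel_measurable borel" by measurable
    fix z show "cmod (f z - f w) \<le> M + M"
      using norm_triangle_ineq4[of "f z" "f w"] fb[of z] fb[of w] by linarith
  qed
  have i1: "integrable lborel (\<lambda>z. (cmod ((f z - f w) * Kf \<nu> w z))^2 * iota_dens \<nu> z)"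
    using Bd_realsq_integrable[OF Bg Bg] by (simp add: power2_eq_square)
  have iK: "integrable lborel (\<lambda>z. (cmod (Kf \<nu> w z))^2 * iota_dens \<nu> z)"
    using Bd_realsq_integrable[OF Bd_Kf Bd_Kf] by (simp add: power2_eq_square)
  have i2: "integrable lborel (\<lambda>z. e^2 * ((cmod (Kf \<nu> w z))^2 * iota_dens \<nu> z) + c * (Nq z ^ \<nu> * iota_dens \<nu> z))"
    by (intro Bochner_Integration.integrable_add integrable_mult_right iK int_Nq_pow)
  have pw: "(cmod ((f z - f w) * Kf \<nu> w z))^2 * iota_dens \<nu> z \<le>
      e^2 * ((cmod (Kf \<nu> w z))^2 * iota_dens \<nu> z) + c * (Nq z ^ \<nu> * iota_dens \<nu> z)" for z
  proof -
    define A where "A = (cmod (1 + z * cnj w))^2"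
    define X where "X = cmod (f z - f w)"
    have io: "iota_dens \<nu> z \<ge> 0" by (rule iota_dens_nonneg)
    have KA: "(cmod (Kf \<nu> w z))^2 = A ^ \<nu>"
      by (simp add: Kf_def A_def norm_power power_mult[symmetric] mult.commute)
    have L: "(cmod ((f z - f w) * Kf \<nu> w z))^2 = X^2 * A^\<nu>"
      by (simp add: norm_mult power_mult_distrib KA X_def)
    have A0: "A \<ge> 0" by (simp add: A_def)
    have c0: "c \<ge> 0" using \<delta> Nq_pos[of w] by (simp add: c_def)
    have t2: "0 \<le> c * (Nq z ^ \<nu> * iota_dens \<nu> z)" using c0 io Nq_pos[of z] by simp
    have t1: "0 \<le> e^2 * ((cmod (Kf \<nu> w z))^2 * iota_dens \<nu> z)" using io by simp
    show ?thesis
    proof (cases "(cmod (z - w))^2 < \<delta> * (Nq z * Nq w)")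
      case True
      then have "X < e" unfolding X_def by (rule uc)
      then have "X^2 \<le> e^2" by (intro power_mono) (auto simp: X_def)
      then have "X^2 * A^\<nu> * iota_dens \<nu> z \<le> e^2 * A^\<nu> * iota_dens \<nu> z"
        using A0 io by (intro mult_right_mono) auto
      then show ?thesis unfolding L KA using t2 by (simp add: mult.assoc)
    next
      case False
      have "A = Nq z * Nq w - (cmod (z - w))^2" using kernel_identity[of z w] by (simp add: A_def)
      also have "\<dots> \<le> (1 - \<delta>) * (Nq z * Nq w)" using False by (simp add: algebra_simps)
      finally have "A^\<nu> \<le> ((1 - \<delta>) * (Nq z * Nq w))^\<nu>" using A0 by (intro power_mono) auto
      also have "\<dots> = (1 - \<delta>)^\<nu> * Nq w ^ \<nu> * Nq z ^ \<nu>" by (simp add: power_mult_distrib)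
      finally have Ab: "A^\<nu> \<le> (1 - \<delta>)^\<nu> * Nq w ^ \<nu> * Nq z ^ \<nu>" .
      have "X \<le> M + M" using norm_triangle_ineq4[of "f z" "f w"] fb[of z] fb[of w] unfolding X_def by linarith
      then have "X^2 \<le> (2 * M)^2" by (intro power_mono) (auto simp: X_def)
      then have Xb: "X^2 \<le> 4 * M^2" by (simp add: power_mult_distrib)
      have "X^2 * A^\<nu> \<le> (4 * M^2) * ((1 - \<delta>)^\<nu> * Nq w ^ \<nu> * Nq z ^ \<nu>)"
        using Xb Ab A0 by (intro mult_mono) auto
      then have "X^2 * A^\<nu> * iota_dens \<nu> z \<le> (4 * M^2) * ((1 - \<delta>)^\<nu> * Nq w ^ \<nu> * Nq z ^ \<nu>) * iota_dens \<nu> z"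
        using io by (intro mult_right_mono) auto
      also have "\<dots> = c * (Nq z ^ \<nu> * iota_dens \<nu> z)" by (simp add: c_def mult_ac)
      finally show ?thesis unfolding L using t1 by linarith
    qed
  qed
  have "N2 \<nu> (\<lambda>z. (f z - f w) * Kf \<nu> w z) \<le> integral\<^sup>L lborel (\<lambda>z. e^2 * ((cmod (Kf \<nu> w z))^2 * iota_dens \<nu> z) + c * (Nq z ^ \<nu> * iota_dens \<nu> z))"
    unfolding N2_def by (rule integral_mono[OF i1 i2 pw])
  also have "\<dots> = e^2 * N2 \<nu> (Kf \<nu> w) + c * (real \<nu> + 1)"
    using iK int_Nq_pow[of \<nu>] by (simp add: N2_def)
  also have "\<dots> = Nq w ^ \<nu> * (e^2 + 4 * M^2 * (real \<nu> + 1) * (1 - \<delta>)^\<nu>)"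
    by (simp add: N2_Kf c_def algebra_simps)
  finally show ?thesis .
qed

lemma Rstar_eq: "Rnu_star \<nu> f h = (\<lambda>x. (1 / (of_nat \<nu> + 1)) * Tf \<nu> f h x)"
  by (simp add: Rnu_star_def Tf_def Pop_def)

lemma Tf_scale: "Tf \<nu> f (\<lambda>z. k * H z) x = k * Tf \<nu> f H x"
proof -
  have "Tf \<nu> f (\<lambda>z. k * H z) x = integral\<^sup>L lborel (\<lambda>z. k * (f z * H z * (1 + x * cnj z)^\<nu> * complex_of_real (iota_dens \<nu> z)))"
    unfolding Tf_def Pop_def by (intro Bochner_Integration.integral_cong refl) (simp add: mult_ac)
  also have "\<dots> = k * Tf \<nu> f H x"
    unfolding Tf_def Pop_def by (rule integral_mult_right_zero)
  finally show ?thesis .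
qed

lemma Rstar_iter: "(Rnu_star \<nu> f ^^ n) h = (\<lambda>x. (1 / (of_nat \<nu> + 1))^n * (Tf \<nu> f ^^ n) h x)"
proof (induction n)
  case 0 then show ?case by simp
next
  case (Suc n)
  have "(Rnu_star \<nu> f ^^ Suc n) h = Rnu_star \<nu> f ((Rnu_star \<nu> f ^^ n) h)" by simp
  also have "\<dots> = Rnu_star \<nu> f (\<lambda>x. (1 / (of_nat \<nu> + 1))^n * (Tf \<nu> f ^^ n) h x)" by (simp only: Suc.IH)
  also have "\<dots> = (\<lambda>x. (1 / (of_nat \<nu> + 1)) * ((1 / (of_nat \<nu> + 1))^n * Tf \<nu> f ((Tf \<nu> f ^^ n) h) x))"
    by (simp only: Rstar_eq Tf_scale)
  also have "\<dots> = (\<lambda>x. (1 / (of_nat \<nu> + 1))^Suc n * (Tf \<nu> f ^^ Suc n) h x)"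
    by (simp only: power_Suc mult.assoc funpow.simps comp_def)
  finally show ?case .
qed

lemma lhs_eq:
  "(of_nat \<nu> + 1) ^ n * Rnu \<nu> ((Rnu_star \<nu> f) ^^ n) z - f z ^ n
     = ((Tf \<nu> f ^^ n) (Kf \<nu> z) z - f z ^ n * Kf \<nu> z z) / complex_of_real (Nq z ^ \<nu>)"
proof -
  have K: "(\<lambda>w. Knu \<nu> w z) = Kf \<nu> z" by (simp add: Knu_def Kf_def)
  have ne: "(of_nat \<nu> + 1 :: complex) \<noteq> 0"
    by (metis of_nat_Suc of_nat_eq_0_iff add.commute nat.simps(3))
  have one: "(of_nat \<nu> + 1 :: complex) ^ n * (1 / (of_nat \<nu> + 1)) ^ n = 1"
    using ne by (simp add: power_mult_distrib[symmetric])
  have N: "complex_of_real (Nq z ^ \<nu>) \<noteq> 0" using Nq_pos[of z] by simp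
  have "Rnu \<nu> ((Rnu_star \<nu> f) ^^ n) z = (1 / (of_nat \<nu> + 1))^n * (Tf \<nu> f ^^ n) (Kf \<nu> z) z / complex_of_real (Nq z ^ \<nu>)"
    unfolding Rnu_def op_kernel_def Rstar_iter K by (simp add: Nq_def)
  then have "(of_nat \<nu> + 1) ^ n * Rnu \<nu> ((Rnu_star \<nu> f) ^^ n) z = (Tf \<nu> f ^^ n) (Kf \<nu> z) z / complex_of_real (Nq z ^ \<nu>)"
    using one by (simp add: mult.assoc[symmetric])
  then show ?thesis using N by (simp add: Kf_diag diff_divide_distrib)
qed

lemma sqrt_bound_helper:
  fixes B N E :: real
  assumes "N > 0" "B \<le> N * E" "B \<ge> 0"
  shows "sqrt (B * N) / N \<le> sqrt E"
proof -
  have E0: "E \<ge> 0" using assms by (smt (verit) zero_le_mult_iff)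
  have "sqrt (B * N) \<le> sqrt (N * E * N)" using assms by (intro real_sqrt_le_mono mult_right_mono) auto
  also have "\<dots> = N * sqrt E" using assms E0 by (simp add: real_sqrt_mult mult.commute)
  finally show ?thesis using assms by (simp add: field_simps)
qed

theorem mainTheorem8:
  fixes f :: "complex \<Rightarrow> complex" and n :: nat
  assumes "cont_CP1 f" and "n \<ge> 1"
  shows "uniform_limit UNIV
           (\<lambda>\<nu> z. (of_nat \<nu> + 1) ^ n * Rnu \<nu> ((Rnu_star \<nu> f) ^^ n) z - f z ^ n)
           (\<lambda>z. 0) sequentially"
proof (rule uniform_limitI)
  fix \<epsilon> :: real assume \<epsilon>: "\<epsilon> > 0"
  have fm[measurable]: "f \<in> borel_measurable borel"
    using assms(1) by (auto simp: cont_CP1_def intro: borel_measurable_continuous_onI)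
  obtain M0 where M0: "\<And>z. cmod (f z) \<le> M0" using cont_CP1_bounded[OF assms(1)] by blast
  define M where "M = max M0 1"
  have fb: "\<And>z. cmod (f z) \<le> M" using M0 by (smt (verit) M_def)
  have M1: "M \<ge> 1" by (simp add: M_def)
  define C0 where "C0 = real n * M^n"
  have C0: "C0 > 0" using assms(2) M1 by (simp add: C0_def)
  define t where "t = \<epsilon> / (2 * C0)"
  have t: "t > 0" using \<epsilon> C0 by (simp add: t_def)
  define e where "e = t / 2"
  have e: "e > 0" using t by (simp add: e_def)
  obtain \<delta> where \<delta>: "\<delta> > 0" "\<delta> < 1"
    and uc: "\<And>z w. (cmod (z - w))^2 < \<delta> * (Nq z * Nq w) \<Longrightarrow> cmod (f z - f w) < e"
    using chordal_uc[OF assms(1) e] by blast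
  define Q where "Q = (\<lambda>\<nu>::nat. 4 * M^2 * (real \<nu> + 1) * (1 - \<delta>)^\<nu>)"
  have "(\<lambda>\<nu>. 4 * M^2 * (real \<nu> * (1 - \<delta>)^\<nu> + (1 - \<delta>)^\<nu>)) \<longlonglongrightarrow> 4 * M^2 * (0 + 0)"
    using \<delta> by (intro tendsto_intros powser_times_n_limit_0 LIMSEQ_power_zero) auto
  then have "Q \<longlonglongrightarrow> 0" unfolding Q_def by (simp add: algebra_simps)
  then have ev: "\<forall>\<^sub>F \<nu> in sequentially. Q \<nu> < t^2 / 4"
    using t by (intro order_tendstoD(2)) auto
  show "\<forall>\<^sub>F \<nu> in sequentially. \<forall>z\<in>UNIV. dist ((of_nat \<nu> + 1) ^ n * Rnu \<nu> ((Rnu_star \<nu> f) ^^ n) z - f z ^ n) 0 < \<epsilon>"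
    using ev
  proof eventually_elim
    case (elim \<nu>)
    show ?case
    proof
      fix z :: complex
      define B where "B = N2 \<nu> (\<lambda>w. (f w - f z) * Kf \<nu> z w)"
      have Npos: "Nq z ^ \<nu> > 0" using Nq_pos[of z] by simp
      have Bb: "B \<le> Nq z ^ \<nu> * (e^2 + Q \<nu>)"
        unfolding B_def Q_def using concentration[OF fm fb \<delta> _ uc, of \<nu> z] e by (simp add: mult.assoc)
      have mb: "cmod ((Tf \<nu> f ^^ n) (Kf \<nu> z) z - f z ^ n * Kf \<nu> z z) \<le> C0 * sqrt (B * Nq z ^ \<nu>)"
        unfolding B_def C0_def by (rule main_bound[OF fm fb M1])
      have "cmod ((of_nat \<nu> + 1) ^ n * Rnu \<nu> ((Rnu_star \<nu> f) ^^ n) z - f z ^ n)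
          = cmod ((Tf \<nu> f ^^ n) (Kf \<nu> z) z - f z ^ n * Kf \<nu> z z) / Nq z ^ \<nu>"
      proof -
        have nn: "cmod (complex_of_real (Nq z ^ \<nu>)) = Nq z ^ \<nu>" using Npos by (simp only: norm_of_real)
        show ?thesis unfolding lhs_eq norm_divide nn ..
      qed
      also have "\<dots> \<le> C0 * sqrt (B * Nq z ^ \<nu>) / Nq z ^ \<nu>"
        using mb Npos by (simp add: divide_right_mono)
      also have "\<dots> = C0 * (sqrt (B * Nq z ^ \<nu>) / Nq z ^ \<nu>)" by simp
      also have "\<dots> \<le> C0 * sqrt (e^2 + Q \<nu>)"
        using C0 sqrt_bound_helper[OF Npos Bb] N2_nonneg[of \<nu>] unfolding B_def
        by (intro mult_left_mono) auto
      also have "\<dots> < C0 * t"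
      proof -
        have tp: "t^2 > 0" using t by simp
        have e2: "e^2 = t^2 / 4" by (simp add: e_def power_divide)
        have "e^2 + Q \<nu> < t^2" unfolding e2 using elim tp by linarith
        then have "sqrt (e^2 + Q \<nu>) < sqrt (t^2)" by (rule real_sqrt_less_mono)
        also have "sqrt (t^2) = t" using t by simp
        finally have "sqrt (e^2 + Q \<nu>) < t" .
        then show ?thesis using C0 by simp
      qed
      also have "\<dots> < \<epsilon>" using \<epsilon> C0 by (simp add: t_def)
      finally show "dist ((of_nat \<nu> + 1) ^ n * Rnu \<nu> ((Rnu_star \<nu> f) ^^ n) z - f z ^ n) 0 < \<epsilon>"
        by (simp add: dist_norm)
    qed
  qed
qed

end
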